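(* Let $\mathfrak{q}$ be an $n\times n$ quantum parameter matrix over a field $k$ and $V$ an $n$-dimensional $k$-vector space with basis $v_1,\dots,v_n$. Then $$\mathrm{Aut}_{\mathrm{gr}}(S_{\mathfrak{q}}(V))\ \cong\ \Big(\prod_{B\in\mathcal{B}_{\mathfrak{q}}}\mathrm{GL}(V_B)\Big)\rtimes\mathrm{Stab}(\mathfrak{q}),$$ where $\mathrm{Stab}(\mathfrak{q})$ acts on $\prod_B\mathrm{GL}(V_B)$ by $h\mapsto\iota(\sigma)h\iota(\sigma)^{-1}$, i.e. the multiplication is $(g,\sigma)(h,\tau)=(g\,\iota(\sigma)h\iota(\sigma)^{-1},\sigma\tau)$.
   Context: Let $k$ be a field. An $n\times n$ quantum parameter matrix is a matrix $\mathfrak{q}=(q_{ij})$ over $k$ with $q_{ii}=1$ and $q_{ij}q_{ji}=1$ for all $i,j$. For $V$ with basis $v_1,\dots,v_n$, $S_{\mathfrak{q}}(V)$ is the $k$-algebra generated by $v_1,\dots,v_n$ with relations $v_jv_i=q_{ij}v_iv_j$, graded by $\deg v_i=1$; $\mathrm{Aut}_{\mathrm{gr}}(S_{\mathfrak{q}}(V))$ is its group of degree-preserving algebra automorphisms, regarded as a subgroup of $\mathrm{GL}(V)$ via restriction. $\mathcal{B}_{\mathfrak{q}}$ is the partition of $[n]=\{1,\dots,n\}$ with $i\sim j$ iff rows $i,j$ of $\mathfrak{q}$ are identical (its classes are the blocks). For $B\subseteq[n]$, $V_B=\mathrm{span}\{v_i:i\in B\}$, and $\mathrm{GL}(V_B)$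 is identified with the subgroup of $\mathrm{GL}(V)$ acting on $V_B$ and fixing $v_i$ for $i\notin B$. For $B,C\subseteq[n]$, $\mathfrak{q}_{BC}=(q_{ij})_{i\in B,j\in C}$. With $r=|\mathcal{B}_{\mathfrak{q}}|$, $\mathfrak{S}_r$ permutes the blocks and $\mathrm{Stab}(\mathfrak{q})=\{\sigma\in\mathfrak{S}_r:|\sigma(B)|=|B|\text{ and }\mathfrak{q}_{BC}=\mathfrak{q}_{\sigma(B)\sigma(C)}\text{ for all blocks }B,C\}$. For $\sigma\in\mathrm{Stab}(\mathfrak{q})$, $\iota(\sigma)$ is the unique invertible linear map on $V$ that permutes the basis vectors $v_i$, sends $V_B$ onto $V_{\sigma(B)}$ for each block $B$, and preserves the order $v_1<\dots<v_n$ within each block. *)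

theory Defs
  imports "Jordan_Normal_Form.Matrix" "HOL-Algebra.Group" "HOL-Combinatorics.Permutations"
begin

text \<open>Indices: the basis vectors v_1..v_n of the paper are indexed here by 0..n-1.
  Matrices of linear maps on V use the column convention: column j is the image of v_j.\<close>

definition qpm :: "nat \<Rightarrow> (nat \<Rightarrow> nat \<Rightarrow> 'k::field) \<Rightarrow> bool" where
  "qpm n q \<longleftrightarrow> (\<forall>i<n. q i i = 1) \<and> (\<forall>i<n. \<forall>j<n. q i j * q j i = 1)"

text \<open>An element is a finitely supported coefficient function on words over {0..<n}.\<close>
definition fa_carrier :: "nat \<Rightarrow> (nat list \<Rightarrow> 'k::field) set" where
  "fa_carrier n = {f. finite {w. f w \<noteq> 0} \<and> (\<forall>w. f w \<noteq> 0 \<longrightarrow> set w \<subseteq> {..<n})}"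

definition fa_mult :: "(nat list \<Rightarrow> 'k::field) \<Rightarrow> (nat list \<Rightarrow> 'k) \<Rightarrow> nat list \<Rightarrow> 'k" where
  "fa_mult f g w = (\<Sum>i\<le>length w. f (take i w) * g (drop i w))"

definition fa_one :: "nat list \<Rightarrow> 'k::field" where
  "fa_one w = (if w = [] then 1 else 0)"

definition fa_gen :: "nat \<Rightarrow> nat list \<Rightarrow> 'k::field" where
  "fa_gen i w = (if w = [i] then 1 else 0)"

definition fa_add :: "(nat list \<Rightarrow> 'k::field) \<Rightarrow> (nat list \<Rightarrow> 'k) \<Rightarrow> nat list \<Rightarrow> 'k" where
  "fa_add f g w = f w + g w"

definition fa_sub :: "(nat list \<Rightarrow> 'k::field) \<Rightarrow> (nat list \<Rightarrow> 'k) \<Rightarrow> nat list \<Rightarrow> 'k" where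
  "fa_sub f g w = f w - g w"

definition fa_smult :: "'k::field \<Rightarrow> (nat list \<Rightarrow> 'k) \<Rightarrow> nat list \<Rightarrow> 'k" where
  "fa_smult c f w = c * f w"

definition sq_rel :: "(nat \<Rightarrow> nat \<Rightarrow> 'k::field) \<Rightarrow> nat \<Rightarrow> nat \<Rightarrow> nat list \<Rightarrow> 'k" where
  "sq_rel q i j = fa_sub (fa_mult (fa_gen j) (fa_gen i)) (fa_smult (q i j) (fa_mult (fa_gen i) (fa_gen j)))"

inductive_set sq_ideal :: "nat \<Rightarrow> (nat \<Rightarrow> nat \<Rightarrow> 'k::field) \<Rightarrow> (nat list \<Rightarrow> 'k) set"
  for n q where
  zero: "(\<lambda>w. 0) \<in> sq_ideal n q"
| add: "x \<in> sq_ideal n q \<Longrightarrow> y \<in> sq_ideal n q \<Longrightarrow> fa_add x y \<in> sq_ideal n q"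
| gen: "a \<in> fa_carrier n \<Longrightarrow> b \<in> fa_carrier n \<Longrightarrow> i < n \<Longrightarrow> j < n \<Longrightarrow>
        fa_mult (fa_mult a (sq_rel q i j)) b \<in> sq_ideal n q"

definition fa_homog :: "nat \<Rightarrow> nat \<Rightarrow> (nat list \<Rightarrow> 'k::field) \<Rightarrow> bool" where
  "fa_homog n d f \<longleftrightarrow> f \<in> fa_carrier n \<and> (\<forall>w. f w \<noteq> 0 \<longrightarrow> length w = d)"

text \<open>A degree-preserving algebra automorphism of S_q(V) = k<v>/I, given by its action
  on representatives in the free algebra (everything modulo I).\<close>
definition is_graded_aut ::
  "nat \<Rightarrow> (nat \<Rightarrow> nat \<Rightarrow> 'k::field) \<Rightarrow> ((nat list \<Rightarrow> 'k) \<Rightarrow> (nat list \<Rightarrow> 'k)) \<Rightarrow> bool" where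
  "is_graded_aut n q \<phi> \<longleftrightarrow>
     (let C = fa_carrier n; I = sq_ideal n q in
       (\<forall>x\<in>C. \<phi> x \<in> C) \<and>
       (\<forall>x\<in>C. \<forall>y\<in>C. fa_sub x y \<in> I \<longrightarrow> fa_sub (\<phi> x) (\<phi> y) \<in> I) \<and>
       (\<forall>x\<in>C. \<forall>y\<in>C. fa_sub (\<phi> (fa_add x y)) (fa_add (\<phi> x) (\<phi> y)) \<in> I) \<and>
       (\<forall>c. \<forall>x\<in>C. fa_sub (\<phi> (fa_smult c x)) (fa_smult c (\<phi> x)) \<in> I) \<and>
       (\<forall>x\<in>C. \<forall>y\<in>C. fa_sub (\<phi> (fa_mult x y)) (fa_mult (\<phi> x) (\<phi> y)) \<in> I) \<and>
       fa_sub (\<phi> fa_one) fa_one \<in> I \<and>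
       (\<forall>d x. fa_homog n d x \<longrightarrow> (\<exists>y. fa_homog n d y \<and> fa_sub (\<phi> x) y \<in> I)) \<and>
       (\<forall>x\<in>C. \<forall>y\<in>C. fa_sub (\<phi> x) (\<phi> y) \<in> I \<longrightarrow> fa_sub x y \<in> I) \<and>
       (\<forall>y\<in>C. \<exists>x\<in>C. fa_sub (\<phi> x) y \<in> I))"

definition Aut_gr :: "nat \<Rightarrow> (nat \<Rightarrow> nat \<Rightarrow> 'k::field) \<Rightarrow> 'k mat set" where
  "Aut_gr n q = {g \<in> carrier_mat n n. \<exists>\<phi>. is_graded_aut n q \<phi> \<and>
      (\<forall>j<n. fa_sub (\<phi> (fa_gen j)) (\<lambda>w. \<Sum>i<n. g $$ (i, j) * fa_gen i w) \<in> sq_ideal n q)}"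

definition Aut_gr_group :: "nat \<Rightarrow> (nat \<Rightarrow> nat \<Rightarrow> 'k::field) \<Rightarrow> 'k mat monoid" where
  "Aut_gr_group n q = \<lparr>carrier = Aut_gr n q, mult = (*), one = 1\<^sub>m n\<rparr>"

definition blk :: "nat \<Rightarrow> (nat \<Rightarrow> nat \<Rightarrow> 'k) \<Rightarrow> nat \<Rightarrow> nat set" where
  "blk n q i = {j. j < n \<and> (\<forall>l<n. q i l = q j l)}"

definition blocks :: "nat \<Rightarrow> (nat \<Rightarrow> nat \<Rightarrow> 'k) \<Rightarrow> nat set set" where
  "blocks n q = blk n q ` {..<n}"

text \<open>GL(V_B) inside GL(V): invertible maps preserving V_B and fixing v_i for i not in B.\<close>
definition GL_on :: "nat \<Rightarrow> nat set \<Rightarrow> 'k::field mat set" where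
  "GL_on n B = {g \<in> carrier_mat n n. invertible_mat g \<and>
      (\<forall>j<n. j \<notin> B \<longrightarrow> col g j = unit_vec n j) \<and>
      (\<forall>j\<in>B. \<forall>i<n. g $$ (i, j) \<noteq> 0 \<longrightarrow> i \<in> B)}"

text \<open>The (internal) product of the commuting subgroups GL(V_B), B a block.\<close>
definition block_prod :: "nat \<Rightarrow> (nat \<Rightarrow> nat \<Rightarrow> 'k::field) \<Rightarrow> 'k mat set" where
  "block_prod n q = {g. \<exists>Bs f. distinct Bs \<and> set Bs = blocks n q \<and>
      (\<forall>B\<in>blocks n q. f B \<in> GL_on n B) \<and> g = foldr (\<lambda>B M. f B * M) Bs (1\<^sub>m n)}"

definition Stab :: "nat \<Rightarrow> (nat \<Rightarrow> nat \<Rightarrow> 'k) \<Rightarrow> (nat set \<Rightarrow> nat set) set" where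
  "Stab n q = {\<sigma>. \<sigma> permutes blocks n q \<and>
     (\<forall>B\<in>blocks n q. card (\<sigma> B) = card B) \<and>
     (\<forall>B\<in>blocks n q. \<forall>C\<in>blocks n q. \<forall>a<card B. \<forall>b<card C.
        q (sorted_list_of_set B ! a) (sorted_list_of_set C ! b) =
        q (sorted_list_of_set (\<sigma> B) ! a) (sorted_list_of_set (\<sigma> C) ! b))}"

text \<open>iota(sigma): the permutation matrix sending the a-th basis vector of block B
  (in increasing order; a = number of smaller elements of B) to the a-th basis vector of block sigma(B).\<close>
definition iota :: "nat \<Rightarrow> (nat \<Rightarrow> nat \<Rightarrow> 'k::field) \<Rightarrow> (nat set \<Rightarrow> nat set) \<Rightarrow> 'k mat" where
  "iota n q \<sigma> = mat n n (\<lambda>(r, c).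
     if r = sorted_list_of_set (\<sigma> (blk n q c)) ! card {x \<in> blk n q c. x < c}
     then 1 else 0)"

definition mat_inv :: "nat \<Rightarrow> 'k::field mat \<Rightarrow> 'k mat" where
  "mat_inv n M = (THE N. N \<in> carrier_mat n n \<and> M * N = 1\<^sub>m n \<and> N * M = 1\<^sub>m n)"

definition semidirect :: "nat \<Rightarrow> (nat \<Rightarrow> nat \<Rightarrow> 'k::field) \<Rightarrow> ('k mat \<times> (nat set \<Rightarrow> nat set)) monoid" where
  "semidirect n q = \<lparr>carrier = block_prod n q \<times> Stab n q,
     mult = (\<lambda>(g, \<sigma>) (h, \<tau>). (g * iota n q \<sigma> * h * mat_inv n (iota n q \<sigma>), \<sigma> \<circ> \<tau>)),
     one = (1\<^sub>m n, id)\<rparr>"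

end

theory Submission
  imports Defs "Jordan_Normal_Form.Determinant"
begin

lemma card_less_nth_sorted:
  assumes "finite S" "k < card S"
  shows "card {x\<in>S. x < sorted_list_of_set S ! k} = (k::nat)"
proof -
  let ?xs = "sorted_list_of_set S"
  have st: "sorted_wrt (<) ?xs" by simp
  have len: "length ?xs = card S" by simp
  have set: "set ?xs = S" using assms by simp
  have dist: "distinct ?xs" by simp
  have "{x\<in>S. x < ?xs ! k} = set (take k ?xs)"
  proof (intro equalityI subsetI)
    fix x assume "x \<in> {x\<in>S. x < ?xs ! k}"
    then have x: "x \<in> set ?xs" "x < ?xs ! k" using set by auto
    then obtain j where j: "j < length ?xs" "?xs ! j = x" by (auto simp: in_set_conv_nth)
    have "j < k"
    proof (rule ccontr)
      assume "\<not> j < k"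
      then have "k \<le> j" by simp
      then have "?xs ! k \<le> ?xs ! j"
      proof (cases "k = j")
        case False
        then have "k < j" using \<open>k \<le> j\<close> by simp
        then show ?thesis using sorted_wrt_nth_less[OF st _ j(1)] by fastforce
      qed simp
      then show False using x j by simp
    qed
    then show "x \<in> set (take k ?xs)" using j by (auto simp: in_set_conv_nth intro!: exI[of _ j])
  next
    fix x assume "x \<in> set (take k ?xs)"
    then obtain j where j0: "j < length (take k ?xs)" "take k ?xs ! j = x" by (metis in_set_conv_nth)
    then have j: "j < k" "?xs ! j = x" by auto
    then have "x < ?xs ! k" using sorted_wrt_nth_less[OF st j(1)] assms len by simp
    moreover have "x \<in> S" using j assms len set nth_mem[of j ?xs] by auto
    ultimately show "x \<in> {x\<in>S. x < ?xs ! k}" by simp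
  qed
  then show ?thesis using dist assms len by (simp add: distinct_card)
qed

lemma nth_sorted_card_less:
  assumes "finite S" "c \<in> S"
  shows "sorted_list_of_set S ! card {x\<in>S. x < c} = (c::nat)"
proof -
  let ?xs = "sorted_list_of_set S"
  obtain j where j: "j < length ?xs" "?xs ! j = c" using assms by (metis in_set_conv_nth set_sorted_list_of_set)
  then have "card {x\<in>S. x < c} = j" using card_less_nth_sorted[OF assms(1), of j] by simp
  then show ?thesis using j by simp
qed

lemma nth_sorted_mem:
  assumes "finite S" "k < card S"
  shows "sorted_list_of_set S ! k \<in> S"
  using assms by (metis length_sorted_list_of_set nth_mem set_sorted_list_of_set)

lemma card_less_lt:
  assumes "finite S" "c \<in> S"
  shows "card {x\<in>S. x < c} < card (S::nat set)"
  using assms by (intro psubset_card_mono) auto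

definition simq :: "nat \<Rightarrow> (nat \<Rightarrow> nat \<Rightarrow> 'k) \<Rightarrow> nat \<Rightarrow> nat \<Rightarrow> bool" where
  "simq n q i j \<longleftrightarrow> (\<forall>l<n. q i l = q j l)"

definition pos :: "nat \<Rightarrow> (nat \<Rightarrow> nat \<Rightarrow> 'k) \<Rightarrow> (nat set \<Rightarrow> nat set) \<Rightarrow> nat \<Rightarrow> nat" where
  "pos n q \<sigma> c = sorted_list_of_set (\<sigma> (blk n q c)) ! card {x \<in> blk n q c. x < c}"

lemma blk_iff: "j \<in> blk n q i \<longleftrightarrow> j < n \<and> simq n q i j"
  by (auto simp: blk_def simq_def)

lemma simq_refl: "simq n q i i" by (simp add: simq_def)
lemma simq_sym: "simq n q i j \<Longrightarrow> simq n q j i" by (simp add: simq_def)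
lemma simq_trans: "simq n q i j \<Longrightarrow> simq n q j k \<Longrightarrow> simq n q i k" by (simp add: simq_def)

lemma blk_self: "c < n \<Longrightarrow> c \<in> blk n q c" by (simp add: blk_iff simq_refl)
lemma blk_sub: "blk n q c \<subseteq> {..<n}" by (auto simp: blk_iff)
lemma blk_finite: "finite (blk n q c)" by (rule finite_subset[OF blk_sub]) simp
lemma blk_eq: "x \<in> blk n q c \<Longrightarrow> blk n q x = blk n q c"
  by (auto simp: blk_iff simq_def)
lemma blk_eq_iff: "x < n \<Longrightarrow> blk n q x = blk n q y \<longleftrightarrow> simq n q y x"
  by (metis blk_eq blk_iff blk_self)

lemma blocks_iff: "B \<in> blocks n q \<longleftrightarrow> (\<exists>c<n. B = blk n q c)"
  by (auto simp: blocks_def)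
lemma blocks_finite: "finite (blocks n q)" by (simp add: blocks_def)
lemma blocks_mem_blk: "B \<in> blocks n q \<Longrightarrow> x \<in> B \<Longrightarrow> B = blk n q x"
  by (metis blk_eq blocks_iff)
lemma blocks_sub: "B \<in> blocks n q \<Longrightarrow> B \<subseteq> {..<n}"
  using blk_sub blocks_iff by metis
lemma blocks_finite': "B \<in> blocks n q \<Longrightarrow> finite B"
  using blk_finite blocks_iff by metis
lemma blocks_Union: "\<Union>(blocks n q) = {..<n}"
  using blk_self blocks_sub by (fastforce simp: blocks_iff)

context
  fixes n :: nat and q :: "nat \<Rightarrow> nat \<Rightarrow> 'k::field"
  assumes Q: "qpm n q"
begin

lemma q_const:
  assumes "i < n" "i' < n" "j < n" "j' < n" "simq n q i i'" "simq n q j j'"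
  shows "q i j = q i' j'"
proof -
  have 1: "q i j = q i' j" using assms by (simp add: simq_def)
  have 2: "q j i' = q j' i'" using assms by (simp add: simq_def)
  have a: "q i' j * q j i' = 1" "q i' j' * q j' i' = 1" using Q assms by (auto simp: qpm_def)
  then have "q i' j = q i' j'" using 2 by (metis mult_right_cancel one_neq_zero mult_zero_right)
  then show ?thesis using 1 by simp
qed

lemma Stab_blocks: "\<sigma> \<in> Stab n q \<Longrightarrow> B \<in> blocks n q \<Longrightarrow> \<sigma> B \<in> blocks n q"
  by (auto simp: Stab_def permutes_in_image)

lemma pos_props:
  assumes s: "\<sigma> \<in> Stab n q" and c: "c < n"
  shows "pos n q \<sigma> c \<in> \<sigma> (blk n q c)" "pos n q \<sigma> c < n"
    "blk n q (pos n q \<sigma> c) = \<sigma> (blk n q c)"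
    "card {x \<in> blk n q (pos n q \<sigma> c). x < pos n q \<sigma> c} = card {x \<in> blk n q c. x < c}"
proof -
  have B: "blk n q c \<in> blocks n q" using c by (auto simp: blocks_iff)
  have sB: "\<sigma> (blk n q c) \<in> blocks n q" using Stab_blocks[OF s B] .
  have cd: "card (\<sigma> (blk n q c)) = card (blk n q c)" using s B by (auto simp: Stab_def)
  have lt: "card {x \<in> blk n q c. x < c} < card (\<sigma> (blk n q c))"
    using card_less_lt[OF blk_finite blk_self[OF c]] cd by simp
  show 1: "pos n q \<sigma> c \<in> \<sigma> (blk n q c)" unfolding pos_def
    by (rule nth_sorted_mem[OF blocks_finite'[OF sB] lt])
  show "pos n q \<sigma> c < n" using 1 blocks_sub[OF sB] by auto
  show 2: "blk n q (pos n q \<sigma> c) = \<sigma> (blk n q c)" using blocks_mem_blk[OF sB 1] by simp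
  show "card {x \<in> blk n q (pos n q \<sigma> c). x < pos n q \<sigma> c} = card {x \<in> blk n q c. x < c}"
    unfolding 2 unfolding pos_def by (rule card_less_nth_sorted[OF blocks_finite'[OF sB] lt])
qed

lemma pos_comp:
  assumes "\<sigma> \<in> Stab n q" "\<tau> \<in> Stab n q" "c < n"
  shows "pos n q \<sigma> (pos n q \<tau> c) = pos n q (\<sigma> \<circ> \<tau>) c"
  using pos_props[OF assms(2,3)] unfolding pos_def by simp

lemma pos_id: "c < n \<Longrightarrow> pos n q id c = c"
  unfolding pos_def by (simp add: nth_sorted_card_less blk_finite blk_self)

lemma Stab_id: "id \<in> Stab n q"
  by (simp add: Stab_def permutes_id)

lemma Stab_comp: assumes s: "\<sigma> \<in> Stab n q" and t: "\<tau> \<in> Stab n q" shows "\<sigma> \<circ> \<tau> \<in> Stab n q"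
proof -
  have p: "\<sigma> \<circ> \<tau> permutes blocks n q" using s t by (simp add: Stab_def permutes_compose)
  have c: "\<forall>B\<in>blocks n q. card ((\<sigma> \<circ> \<tau>) B) = card B"
    using s t Stab_blocks[OF t] by (simp add: Stab_def)
  have "\<forall>B\<in>blocks n q. \<forall>C\<in>blocks n q. \<forall>a<card B. \<forall>b<card C.
        q (sorted_list_of_set B ! a) (sorted_list_of_set C ! b) =
        q (sorted_list_of_set ((\<sigma> \<circ> \<tau>) B) ! a) (sorted_list_of_set ((\<sigma> \<circ> \<tau>) C) ! b)"
  proof (intro ballI allI impI)
    fix B C a b assume h: "B \<in> blocks n q" "C \<in> blocks n q" "a < card B" "b < card C"
    have tB: "\<tau> B \<in> blocks n q" "\<tau> C \<in> blocks n q" using Stab_blocks[OF t] h by auto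
    have ab: "a < card (\<tau> B)" "b < card (\<tau> C)" using t h by (auto simp: Stab_def)
    have "q (sorted_list_of_set B ! a) (sorted_list_of_set C ! b) =
        q (sorted_list_of_set (\<tau> B) ! a) (sorted_list_of_set (\<tau> C) ! b)"
      using t h unfolding Stab_def by blast
    also have "\<dots> = q (sorted_list_of_set (\<sigma> (\<tau> B)) ! a) (sorted_list_of_set (\<sigma> (\<tau> C)) ! b)"
      using s tB ab unfolding Stab_def by blast
    finally show "q (sorted_list_of_set B ! a) (sorted_list_of_set C ! b) =
        q (sorted_list_of_set ((\<sigma> \<circ> \<tau>) B) ! a) (sorted_list_of_set ((\<sigma> \<circ> \<tau>) C) ! b)" by simp
  qed
  then show ?thesis using p c by (simp add: Stab_def)
qed

lemma Stab_inv: assumes s: "\<sigma> \<in> Stab n q" shows "inv_into UNIV \<sigma> \<in> Stab n q"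
proof -
  have p: "\<sigma> permutes blocks n q" using s by (simp add: Stab_def)
  have pi: "inv_into UNIV \<sigma> permutes blocks n q" using permutes_inv[OF p] .
  have inv1: "\<And>B. \<sigma> (inv_into UNIV \<sigma> B) = B" using permutes_inverses(1)[OF p] .
  have m: "\<And>B. B \<in> blocks n q \<Longrightarrow> inv_into UNIV \<sigma> B \<in> blocks n q" using permutes_in_image[OF pi] by simp
  have c: "\<forall>B\<in>blocks n q. card (inv_into UNIV \<sigma> B) = card B"
  proof
    fix B assume "B \<in> blocks n q"
    then have "card (\<sigma> (inv_into UNIV \<sigma> B)) = card (inv_into UNIV \<sigma> B)" using s m by (simp add: Stab_def)
    then show "card (inv_into UNIV \<sigma> B) = card B" using inv1 by simp
  qed
  have "\<forall>B\<in>blocks n q. \<forall>C\<in>blocks n q. \<forall>a<card B. \<forall>b<card C.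
        q (sorted_list_of_set B ! a) (sorted_list_of_set C ! b) =
        q (sorted_list_of_set (inv_into UNIV \<sigma> B) ! a) (sorted_list_of_set (inv_into UNIV \<sigma> C) ! b)"
  proof (intro ballI allI impI)
    fix B C a b assume h: "B \<in> blocks n q" "C \<in> blocks n q" "a < card B" "b < card C"
    have "a < card (inv_into UNIV \<sigma> B)" "b < card (inv_into UNIV \<sigma> C)" using c h by auto
    then show "q (sorted_list_of_set B ! a) (sorted_list_of_set C ! b) =
        q (sorted_list_of_set (inv_into UNIV \<sigma> B) ! a) (sorted_list_of_set (inv_into UNIV \<sigma> C) ! b)"
    proof -
      have "q (sorted_list_of_set (inv_into UNIV \<sigma> B) ! a) (sorted_list_of_set (inv_into UNIV \<sigma> C) ! b) =
        q (sorted_list_of_set (\<sigma> (inv_into UNIV \<sigma> B)) ! a) (sorted_list_of_set (\<sigma> (inv_into UNIV \<sigma> C)) ! b)"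
        using s m[OF h(1)] m[OF h(2)] \<open>a < card (inv_into UNIV \<sigma> B)\<close> \<open>b < card (inv_into UNIV \<sigma> C)\<close>
        unfolding Stab_def by blast
      then show ?thesis using inv1 by simp
    qed
  qed
  then show ?thesis using pi c by (simp add: Stab_def)
qed

lemma iota_alt: "iota n q \<sigma> = mat n n (\<lambda>(r, c). if r = pos n q \<sigma> c then 1 else 0)"
  unfolding iota_def pos_def ..

lemma iota_carrier: "iota n q \<sigma> \<in> carrier_mat n n" by (simp add: iota_alt)

lemma mult_iota_right:
  assumes "\<sigma> \<in> Stab n q" "g \<in> carrier_mat n n" "a < n" "c < n"
  shows "(g * iota n q \<sigma>) $$ (a, c) = g $$ (a, pos n q \<sigma> c)"
proof -
  have p: "pos n q \<sigma> c < n" using pos_props[OF assms(1,4)] by simp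
  have "(g * iota n q \<sigma>) $$ (a, c) = (\<Sum>m<n. g $$ (a, m) * (if m = pos n q \<sigma> c then 1 else 0))"
    using assms by (simp add: iota_alt scalar_prod_def atLeast0LessThan)
  also have "\<dots> = (\<Sum>m<n. if m = pos n q \<sigma> c then g $$ (a, m) else 0)"
    by (intro sum.cong) auto
  also have "\<dots> = g $$ (a, pos n q \<sigma> c)" using p by (simp add: sum.delta')
  finally show ?thesis .
qed

lemma iota_mult:
  assumes "\<sigma> \<in> Stab n q" "\<tau> \<in> Stab n q"
  shows "iota n q \<sigma> * iota n q \<tau> = iota n q (\<sigma> \<circ> \<tau>)"
proof (rule eq_matI)
  fix r c assume rc: "r < dim_row (iota n q (\<sigma> \<circ> \<tau>))" "c < dim_col (iota n q (\<sigma> \<circ> \<tau>))"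
  then have "r < n" "c < n" by (auto simp: iota_alt)
  note rc' = this
  have "(iota n q \<sigma> * iota n q \<tau>) $$ (r, c) = iota n q \<sigma> $$ (r, pos n q \<tau> c)"
    by (rule mult_iota_right[OF assms(2) iota_carrier rc'])
  also have "\<dots> = (if r = pos n q \<sigma> (pos n q \<tau> c) then 1 else 0)"
    using pos_props(2)[OF assms(2) rc'(2)] rc' unfolding iota_alt by simp
  also have "\<dots> = iota n q (\<sigma> \<circ> \<tau>) $$ (r, c)"
    unfolding pos_comp[OF assms rc'(2)] using rc' unfolding iota_alt by simp
  finally show "(iota n q \<sigma> * iota n q \<tau>) $$ (r, c) = iota n q (\<sigma> \<circ> \<tau>) $$ (r, c)" .
qed (auto simp: iota_alt)

lemma iota_id: "iota n q id = 1\<^sub>m n"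
  by (rule eq_matI) (auto simp: iota_alt pos_id)

lemma iota_inv:
  assumes "\<sigma> \<in> Stab n q"
  shows "iota n q \<sigma> * iota n q (inv_into UNIV \<sigma>) = 1\<^sub>m n" "iota n q (inv_into UNIV \<sigma>) * iota n q \<sigma> = 1\<^sub>m n"
proof -
  have p: "\<sigma> permutes blocks n q" using assms by (simp add: Stab_def)
  have "\<sigma> \<circ> inv_into UNIV \<sigma> = id" "inv_into UNIV \<sigma> \<circ> \<sigma> = id" using permutes_inverses[OF p] by auto
  then show "iota n q \<sigma> * iota n q (inv_into UNIV \<sigma>) = 1\<^sub>m n" "iota n q (inv_into UNIV \<sigma>) * iota n q \<sigma> = 1\<^sub>m n"
    using iota_mult[OF assms Stab_inv[OF assms]] iota_mult[OF Stab_inv[OF assms] assms] iota_id by auto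
qed

lemma mat_inv_unique:
  assumes "M \<in> carrier_mat n n" "N \<in> carrier_mat n n" "M * N = 1\<^sub>m n" "N * M = 1\<^sub>m n"
  shows "mat_inv n M = N"
  unfolding mat_inv_def
proof (rule the_equality)
  show "N \<in> carrier_mat n n \<and> M * N = 1\<^sub>m n \<and> N * M = 1\<^sub>m n" using assms by simp
  fix N' assume h: "N' \<in> carrier_mat n n \<and> M * N' = 1\<^sub>m n \<and> N' * M = 1\<^sub>m n"
  have "N' = N' * (M * N)" using assms h right_mult_one_mat[of N' n n] by simp
  also have "\<dots> = (N' * M) * N" using assms h by (metis assoc_mult_mat)
  also have "\<dots> = N" using h assms left_mult_one_mat[of N n n] by simp
  finally show "N' = N" .
qed

lemma mat_inv_iota: "\<sigma> \<in> Stab n q \<Longrightarrow> mat_inv n (iota n q \<sigma>) = iota n q (inv_into UNIV \<sigma>)"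
  by (rule mat_inv_unique) (auto simp: iota_carrier iota_inv)

end

definition Kc :: "nat \<Rightarrow> (nat \<Rightarrow> nat \<Rightarrow> 'k::field) \<Rightarrow> 'k mat \<Rightarrow> bool" where
  "Kc n q g \<longleftrightarrow> (\<forall>a<n. \<forall>i<n. \<forall>b<n. \<forall>j<n. g $$ (a, i) \<noteq> 0 \<longrightarrow> g $$ (b, j) \<noteq> 0 \<longrightarrow> q a b = q i j)"

definition inv_ok :: "nat \<Rightarrow> 'k::field mat \<Rightarrow> bool" where
  "inv_ok n g \<longleftrightarrow> g \<in> carrier_mat n n \<and> (\<exists>h \<in> carrier_mat n n. g * h = 1\<^sub>m n \<and> h * g = 1\<^sub>m n)"

definition Sset :: "nat \<Rightarrow> (nat \<Rightarrow> nat \<Rightarrow> 'k::field) \<Rightarrow> 'k mat set" where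
  "Sset n q = {g. inv_ok n g \<and> Kc n q g}"

definition BD :: "nat \<Rightarrow> (nat \<Rightarrow> nat \<Rightarrow> 'k::field) \<Rightarrow> 'k mat set" where
  "BD n q = {f. inv_ok n f \<and> (\<forall>a<n. \<forall>i<n. f $$ (a, i) \<noteq> 0 \<longrightarrow> a \<in> blk n q i)}"

definition SP :: "nat \<Rightarrow> (nat \<Rightarrow> nat \<Rightarrow> 'k::field) \<Rightarrow> 'k mat \<Rightarrow> (nat set \<Rightarrow> nat set) \<Rightarrow> bool" where
  "SP n q g \<sigma> \<longleftrightarrow> (\<forall>a<n. \<forall>c<n. g $$ (a, c) \<noteq> 0 \<longrightarrow> a \<in> \<sigma> (blk n q c))"

lemma mult_entry:
  assumes "A \<in> carrier_mat n n" "B \<in> carrier_mat n n" "a < n" "b < n"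
  shows "(A * B) $$ (a, b) = (\<Sum>c<n. A $$ (a, c) * B $$ (c, b))"
  using assms by (simp add: scalar_prod_def atLeast0LessThan)

lemma mult_entry_nz:
  assumes "A \<in> carrier_mat n n" "B \<in> carrier_mat n n" "a < n" "b < n" "(A * B) $$ (a, b) \<noteq> 0"
  shows "\<exists>c<n. A $$ (a, c) \<noteq> 0 \<and> B $$ (c, b) \<noteq> 0"
proof (rule ccontr)
  assume "\<not> ?thesis"
  then have "(\<Sum>c<n. A $$ (a, c) * B $$ (c, b)) = 0" by (intro sum.neutral) auto
  then show False using assms mult_entry[OF assms(1-4)] by simp
qed

lemma inv_ok_iff: "g \<in> carrier_mat n n \<Longrightarrow> invertible_mat g \<longleftrightarrow> inv_ok n g"
proof
  assume g: "g \<in> carrier_mat n n" and "invertible_mat g"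
  then obtain h where h: "g * h = 1\<^sub>m n" "h * g = 1\<^sub>m (dim_row h)"
    unfolding invertible_mat_def inverts_mat_def by auto
  have "dim_col h = n" using h(1) g by (metis dim_col_mat(1) index_mult_mat(3) index_one_mat(3))
  moreover have "dim_row h = n" using h(2) g by (metis index_mult_mat(3) index_one_mat(3) carrier_matD(2))
  ultimately show "inv_ok n g" using g h unfolding inv_ok_def by auto
next
  assume g: "g \<in> carrier_mat n n" and "inv_ok n g"
  then obtain h where "h \<in> carrier_mat n n" "g * h = 1\<^sub>m n" "h * g = 1\<^sub>m n" unfolding inv_ok_def by auto
  then show "invertible_mat g" using g unfolding invertible_mat_def inverts_mat_def square_mat.simps by auto
qed

lemma inv_ok_mult:
  assumes "inv_ok n f" "inv_ok n g" shows "inv_ok n (f * g)"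
proof -
  obtain h1 where h1: "h1 \<in> carrier_mat n n" "f * h1 = 1\<^sub>m n" "h1 * f = 1\<^sub>m n" "f \<in> carrier_mat n n"
    using assms(1) unfolding inv_ok_def by auto
  obtain h2 where h2: "h2 \<in> carrier_mat n n" "g * h2 = 1\<^sub>m n" "h2 * g = 1\<^sub>m n" "g \<in> carrier_mat n n"
    using assms(2) unfolding inv_ok_def by auto
  have hh: "h2 * h1 \<in> carrier_mat n n" using h1 h2 by simp
  have "(f * g) * (h2 * h1) = f * (g * (h2 * h1))" using assoc_mult_mat[OF h1(4) h2(4) hh] .
  also have "g * (h2 * h1) = (g * h2) * h1" using assoc_mult_mat[OF h2(4) h2(1) h1(1)] by simp
  finally have 1: "(f * g) * (h2 * h1) = 1\<^sub>m n" using h1 h2 by simp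
  have ff: "f * g \<in> carrier_mat n n" using h1 h2 by simp
  have "(h2 * h1) * (f * g) = h2 * (h1 * (f * g))" using assoc_mult_mat[OF h2(1) h1(1) ff] .
  also have "h1 * (f * g) = (h1 * f) * g" using assoc_mult_mat[OF h1(1) h1(4) h2(4)] by simp
  finally have 2: "(h2 * h1) * (f * g) = 1\<^sub>m n" using h1 h2 by simp
  show ?thesis unfolding inv_ok_def using 1 2 h1 h2 by (intro conjI bexI[of _ "h2 * h1"]) auto
qed

lemma inv_ok_row:
  assumes "inv_ok n g" "a < n" shows "\<exists>c<n. g $$ (a, c) \<noteq> 0"
proof -
  obtain h where h: "h \<in> carrier_mat n n" "g * h = 1\<^sub>m n" "g \<in> carrier_mat n n"
    using assms unfolding inv_ok_def by auto
  have "(g * h) $$ (a, a) \<noteq> 0" using h assms by simp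
  then show ?thesis using mult_entry_nz[OF h(3) h(1) assms(2) assms(2)] by auto
qed

lemma inv_ok_col:
  assumes "inv_ok n g" "i < n" shows "\<exists>c<n. g $$ (c, i) \<noteq> 0"
proof -
  obtain h where h: "h \<in> carrier_mat n n" "h * g = 1\<^sub>m n" "g \<in> carrier_mat n n"
    using assms unfolding inv_ok_def by auto
  have "(h * g) $$ (i, i) \<noteq> 0" using h assms by simp
  then show ?thesis using mult_entry_nz[OF h(1) h(3) assms(2) assms(2)] by auto
qed

definition dmat :: "nat \<Rightarrow> (nat \<Rightarrow> bool) \<Rightarrow> 'k::field mat" where
  "dmat n P = mat n n (\<lambda>(x, y). if x = y \<and> P x then 1 else 0)"

lemma dmat_left:
  assumes "A \<in> carrier_mat n n" "a < n" "b < n"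
  shows "(dmat n P * A) $$ (a, b) = (if P a then A $$ (a, b) else 0)"
proof -
  have "(dmat n P * A) $$ (a, b) = (\<Sum>c<n. dmat n P $$ (a, c) * A $$ (c, b))"
    by (rule mult_entry) (use assms in \<open>auto simp: dmat_def\<close>)
  also have "\<dots> = (\<Sum>c<n. if c = a then (if P a then A $$ (a, b) else 0) else 0)"
    by (intro sum.cong) (use assms in \<open>auto simp: dmat_def\<close>)
  also have "\<dots> = (if P a then A $$ (a, b) else 0)" using assms by (simp add: sum.delta)
  finally show ?thesis .
qed

lemma dmat_right:
  assumes "A \<in> carrier_mat n n" "a < n" "b < n"
  shows "(A * dmat n P) $$ (a, b) = (if P b then A $$ (a, b) else 0)"
proof -
  have "(A * dmat n P) $$ (a, b) = (\<Sum>c<n. A $$ (a, c) * dmat n P $$ (c, b))"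
    by (rule mult_entry) (use assms in \<open>auto simp: dmat_def\<close>)
  also have "\<dots> = (\<Sum>c<n. if c = b then (if P b then A $$ (a, b) else 0) else 0)"
    by (intro sum.cong) (use assms in \<open>auto simp: dmat_def\<close>)
  also have "\<dots> = (if P b then A $$ (a, b) else 0)" using assms by (simp add: sum.delta)
  finally show ?thesis .
qed

lemma PQ:
  fixes g h :: "'k::field mat"
  assumes g: "g \<in> carrier_mat n n" and h: "h \<in> carrier_mat n n"
    and gh: "g * h = 1\<^sub>m n" and hg: "h * g = 1\<^sub>m n"
    and sup: "\<And>a i. a < n \<Longrightarrow> i < n \<Longrightarrow> g $$ (a, i) \<noteq> 0 \<Longrightarrow> (P a \<longleftrightarrow> Q i)"
    and ia: "i < n" "a < n" "h $$ (i, a) \<noteq> 0"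
  shows "Q i \<longleftrightarrow> P a"
proof -
  have D: "(dmat n P :: 'k mat) \<in> carrier_mat n n" "(dmat n Q :: 'k mat) \<in> carrier_mat n n" by (auto simp: dmat_def)
  have e: "dmat n P * g = g * dmat n Q"
  proof (rule eq_matI)
    fix x y assume "x < dim_row (g * dmat n Q)" "y < dim_col (g * dmat n Q)"
    then have xy: "x < n" "y < n" using g D by (auto simp: dmat_def)
    show "(dmat n P * g) $$ (x, y) = (g * dmat n Q) $$ (x, y)"
      unfolding dmat_left[OF g xy] dmat_right[OF g xy] using sup[OF xy] by auto
  qed (use g D in \<open>auto simp: dmat_def\<close>)
  have hP: "h * dmat n P \<in> carrier_mat n n" using h D by simp
  have "h * dmat n P = h * dmat n P * (g * h)" using gh right_mult_one_mat[OF hP] by simp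
  also have "\<dots> = (h * dmat n P * g) * h" using assoc_mult_mat[OF hP g h] by simp
  also have "h * dmat n P * g = h * (dmat n P * g)" using assoc_mult_mat[OF h D(1) g] by simp
  also have "\<dots> = (h * g) * dmat n Q" using e assoc_mult_mat[OF h g D(2)] by simp
  also have "\<dots> = dmat n Q" using hg left_mult_one_mat[OF D(2)] by simp
  finally have "h * dmat n P = dmat n Q * h" .
  then have "(h * dmat n P) $$ (i, a) = (dmat n Q * h) $$ (i, a)" by simp
  then show ?thesis unfolding dmat_left[OF h ia(1,2)] dmat_right[OF h ia(1,2)] using ia(3) by (auto split: if_splits)
qed

context
  fixes n :: nat and q :: "nat \<Rightarrow> nat \<Rightarrow> 'k::field"
  assumes Q: "qpm n q"
begin

lemma R1:
  assumes S: "g \<in> Sset n q" and a: "a < n" "i < n" "b < n" "j < n"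
    and nz: "g $$ (a, i) \<noteq> 0" "g $$ (b, j) \<noteq> 0"
  shows "simq n q a b \<longleftrightarrow> simq n q i j"
proof
  have K: "Kc n q g" and I: "inv_ok n g" using S by (auto simp: Sset_def)
  assume s: "simq n q a b"
  show "simq n q i j" unfolding simq_def
  proof (intro allI impI)
    fix l assume l: "l < n"
    obtain c where c: "c < n" "g $$ (c, l) \<noteq> 0" using inv_ok_col[OF I l] by auto
    have "q a c = q i l" "q b c = q j l" using K a c nz l unfolding Kc_def by blast+
    moreover have "q a c = q b c" using s c unfolding simq_def by auto
    ultimately show "q i l = q j l" by simp
  qed
next
  have K: "Kc n q g" and I: "inv_ok n g" using S by (auto simp: Sset_def)
  assume s: "simq n q i j"
  show "simq n q a b" unfolding simq_def
  proof (intro allI impI)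
    fix l assume l: "l < n"
    obtain m where m: "m < n" "g $$ (l, m) \<noteq> 0" using inv_ok_row[OF I l] by auto
    have "q a l = q i m" "q b l = q j m" using K a m nz l unfolding Kc_def by blast+
    moreover have "q i m = q j m" using s m unfolding simq_def by auto
    ultimately show "q a l = q b l" by simp
  qed
qed

lemma Sset_inv:
  assumes S: "g \<in> Sset n q" and h: "h \<in> carrier_mat n n" "g * h = 1\<^sub>m n" "h * g = 1\<^sub>m n"
  shows "h \<in> Sset n q"
proof -
  have I: "inv_ok n g" "g \<in> carrier_mat n n" using S by (auto simp: Sset_def inv_ok_def)
  have Ih: "inv_ok n h" unfolding inv_ok_def using h I by auto
  have key: "\<exists>i0<n. g $$ (a, i0) \<noteq> 0 \<and> simq n q i0 i" if ia: "i < n" "a < n" "h $$ (i, a) \<noteq> 0" for i a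
  proof -
    obtain i0 where i0: "i0 < n" "g $$ (a, i0) \<noteq> 0" using inv_ok_row[OF I(1) ia(2)] by auto
    have "simq n q i0 i \<longleftrightarrow> simq n q a a"
      by (rule PQ[OF I(2) h(1) h(2) h(3) _ ia, where P = "\<lambda>x. simq n q a x" and Q = "\<lambda>y. simq n q i0 y"])
        (use R1[OF S ia(2) i0(1)] i0 in auto)
    then show ?thesis using i0 simq_refl by blast
  qed
  have "Kc n q h" unfolding Kc_def
  proof (intro allI impI)
    fix i a j b assume h1: "i < n" "a < n" "j < n" "b < n" "h $$ (i, a) \<noteq> 0" "h $$ (j, b) \<noteq> 0"
    obtain i0 where i0: "i0 < n" "g $$ (a, i0) \<noteq> 0" "simq n q i0 i" using key h1 by blast
    obtain j0 where j0: "j0 < n" "g $$ (b, j0) \<noteq> 0" "simq n q j0 j" using key h1 by blast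
    have "q a b = q i0 j0" using S h1 i0 j0 unfolding Sset_def Kc_def by blast
    also have "\<dots> = q i j" by (rule q_const[OF Q]) (use i0 j0 h1 in auto)
    finally show "q i j = q a b" by simp
  qed
  then show ?thesis using Ih by (simp add: Sset_def)
qed

lemma Sset_mult:
  assumes "g \<in> Sset n q" "h \<in> Sset n q" shows "g * h \<in> Sset n q"
proof -
  have c: "g \<in> carrier_mat n n" "h \<in> carrier_mat n n" using assms by (auto simp: Sset_def inv_ok_def)
  have "Kc n q (g * h)" unfolding Kc_def
  proof (intro allI impI)
    fix a i b j assume h1: "a < n" "i < n" "b < n" "j < n" "(g * h) $$ (a, i) \<noteq> 0" "(g * h) $$ (b, j) \<noteq> 0"
    obtain c where c1: "c < n" "g $$ (a, c) \<noteq> 0" "h $$ (c, i) \<noteq> 0" using mult_entry_nz[OF c h1(1,2,5)] by auto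
    obtain d where d1: "d < n" "g $$ (b, d) \<noteq> 0" "h $$ (d, j) \<noteq> 0" using mult_entry_nz[OF c h1(3,4,6)] by auto
    have K1: "Kc n q g" "Kc n q h" using assms by (auto simp: Sset_def)
    have "q a b = q c d" using K1(1) c1 d1 h1 unfolding Kc_def by blast
    also have "\<dots> = q i j" using K1(2) c1 d1 h1 unfolding Kc_def by blast
    finally show "q a b = q i j" .
  qed
  then show ?thesis using assms inv_ok_mult by (auto simp: Sset_def)
qed

end

context
  fixes n :: nat and q :: "nat \<Rightarrow> nat \<Rightarrow> 'k::field"
  assumes Q: "qpm n q"
begin

lemma det_perm:
  fixes g :: "'k mat"
  assumes I: "inv_ok n g"
  shows "\<exists>p. p permutes {0..<n} \<and> (\<forall>i<n. g $$ (i, p i) \<noteq> 0)"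
proof (rule ccontr)
  assume nex: "\<not> ?thesis"
  obtain h where h: "h \<in> carrier_mat n n" "g * h = 1\<^sub>m n" and g: "g \<in> carrier_mat n n"
    using I unfolding inv_ok_def by auto
  have "det (g * h) = det g * det h" using det_mult[OF g h(1)] .
  then have "det g * det h = 1" using h by simp
  then have "det g \<noteq> 0" by (metis mult_zero_left zero_neq_one)
  moreover have "det g = 0"
    unfolding det_def'[OF g]
  proof (intro sum.neutral ballI)
    fix p assume "p \<in> {p. p permutes {0..<n}}"
    then obtain i where "i < n" "g $$ (i, p i) = 0" using nex by auto
    then have "(\<Prod>i = 0..<n. g $$ (i, p i)) = 0" by (intro prod_zero) auto
    then show "signof p * (\<Prod>i = 0..<n. g $$ (i, p i)) = 0" by simp
  qed
  ultimately show False by simp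
qed

definition bmap :: "'k mat \<Rightarrow> nat set \<Rightarrow> nat set" where
  "bmap g B = (if B \<in> blocks n q then {a. a < n \<and> (\<exists>i\<in>B. g $$ (a, i) \<noteq> 0)} else B)"

lemma bmap_blk:
  assumes S: "g \<in> Sset n q" and c: "c < n" "a0 < n" "g $$ (a0, c) \<noteq> 0"
  shows "bmap g (blk n q c) = blk n q a0"
proof -
  have I: "inv_ok n g" using S by (simp add: Sset_def)
  have B: "blk n q c \<in> blocks n q" using c by (auto simp: blocks_iff)
  have "{a. a < n \<and> (\<exists>i\<in>blk n q c. g $$ (a, i) \<noteq> 0)} = blk n q a0"
  proof (intro equalityI subsetI)
    fix a assume "a \<in> {a. a < n \<and> (\<exists>i\<in>blk n q c. g $$ (a, i) \<noteq> 0)}"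
    then obtain i where a: "a < n" "i \<in> blk n q c" "g $$ (a, i) \<noteq> 0" by auto
    then have "i < n" "simq n q c i" by (auto simp: blk_iff)
    then have "simq n q a0 a" using R1[OF Q S c(2) c(1) a(1) \<open>i < n\<close> c(3) a(3)] by simp
    then show "a \<in> blk n q a0" using a by (simp add: blk_iff)
  next
    fix a assume "a \<in> blk n q a0"
    then have a: "a < n" "simq n q a0 a" by (auto simp: blk_iff)
    obtain m where m: "m < n" "g $$ (a, m) \<noteq> 0" using inv_ok_row[OF I a(1)] by auto
    have "simq n q c m" using R1[OF Q S c(2) c(1) a(1) m(1) c(3) m(2)] a by simp
    then show "a \<in> {a. a < n \<and> (\<exists>i\<in>blk n q c. g $$ (a, i) \<noteq> 0)}" using a m by (auto simp: blk_iff)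
  qed
  then show ?thesis using B by (simp add: bmap_def)
qed

lemma pos_q:
  assumes s: "\<sigma> \<in> Stab n q" and c: "c < n" "d < n"
  shows "q (pos n q \<sigma> c) (pos n q \<sigma> d) = q c d"
proof -
  have B: "blk n q c \<in> blocks n q" "blk n q d \<in> blocks n q" using c by (auto simp: blocks_iff)
  have lt: "card {x \<in> blk n q c. x < c} < card (blk n q c)" "card {x \<in> blk n q d. x < d} < card (blk n q d)"
    using card_less_lt[OF blk_finite blk_self] c by auto
  have "q (sorted_list_of_set (blk n q c) ! card {x \<in> blk n q c. x < c})
          (sorted_list_of_set (blk n q d) ! card {x \<in> blk n q d. x < d}) =
        q (sorted_list_of_set (\<sigma> (blk n q c)) ! card {x \<in> blk n q c. x < c})
          (sorted_list_of_set (\<sigma> (blk n q d)) ! card {x \<in> blk n q d. x < d})"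
    using s B lt unfolding Stab_def by blast
  moreover have "sorted_list_of_set (blk n q c) ! card {x \<in> blk n q c. x < c} = c"
    "sorted_list_of_set (blk n q d) ! card {x \<in> blk n q d. x < d} = d"
    using nth_sorted_card_less[OF blk_finite blk_self[of c n q]] nth_sorted_card_less[OF blk_finite blk_self[of d n q]] c
    by auto
  ultimately show ?thesis unfolding pos_def by simp
qed

lemma Sset_Stab_exists:
  assumes S: "g \<in> Sset n q"
  shows "\<exists>\<sigma>\<in>Stab n q. SP n q g \<sigma>"
proof -
  have I: "inv_ok n g" and K: "Kc n q g" using S by (auto simp: Sset_def)
  obtain p where p: "p permutes {0..<n}" "\<And>i. i < n \<Longrightarrow> g $$ (i, p i) \<noteq> 0" using det_perm[OF I] by auto
  have bb: "\<exists>a0<n. g $$ (a0, c) \<noteq> 0 \<and> bmap g (blk n q c) = blk n q a0" if c: "c < n" for c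
  proof -
    obtain a0 where "a0 < n" "g $$ (a0, c) \<noteq> 0" using inv_ok_col[OF I c] by auto
    then show ?thesis using bmap_blk[OF S c] by auto
  qed
  have into: "bmap g B \<in> blocks n q" if "B \<in> blocks n q" for B
    using that bb by (auto simp: blocks_iff)
  have inj: "inj_on (bmap g) (blocks n q)"
  proof (rule inj_onI)
    fix B C assume h: "B \<in> blocks n q" "C \<in> blocks n q" "bmap g B = bmap g C"
    obtain c d where cd: "c < n" "d < n" "B = blk n q c" "C = blk n q d" using h by (auto simp: blocks_iff)
    obtain a0 where a0: "a0 < n" "g $$ (a0, c) \<noteq> 0" "bmap g B = blk n q a0" using bb[OF cd(1)] cd by auto
    obtain a1 where a1: "a1 < n" "g $$ (a1, d) \<noteq> 0" "bmap g C = blk n q a1" using bb[OF cd(2)] cd by auto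
    have "simq n q a1 a0" using a0 a1 h(3) blk_eq_iff by metis
    then have "simq n q a0 a1" by (rule simq_sym)
    then have "simq n q c d" using R1[OF Q S a0(1) cd(1) a1(1) cd(2) a0(2) a1(2)] by simp
    then show "B = C" using cd blk_eq_iff by (metis simq_sym)
  qed
  have img: "bmap g ` blocks n q = blocks n q"
    by (rule endo_inj_surj[OF blocks_finite _ inj]) (use into in auto)
  have perm: "bmap g permutes blocks n q"
    by (rule bij_imp_permutes) (use inj img in \<open>auto simp: bij_betw_def bmap_def\<close>)
  have card: "card (bmap g B) = card B" if B: "B \<in> blocks n q" for B
  proof -
    obtain c where c: "c < n" "B = blk n q c" using B by (auto simp: blocks_iff)
    obtain a0 where a0: "a0 < n" "g $$ (a0, c) \<noteq> 0" "bmap g B = blk n q a0" using bb[OF c(1)] c by auto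
    have "p ` blk n q a0 = blk n q c"
    proof (intro equalityI subsetI)
      fix y assume "y \<in> p ` blk n q a0"
      then obtain x where x: "x \<in> blk n q a0" "y = p x" by auto
      then have xn: "x < n" "simq n q a0 x" by (auto simp: blk_iff)
      have pn: "p x < n" using permutes_in_image[OF p(1)] xn by simp
      have "simq n q c (p x)" using R1[OF Q S a0(1) c(1) xn(1) pn a0(2) p(2)[OF xn(1)]] xn by simp
      then show "y \<in> blk n q c" using x pn by (simp add: blk_iff)
    next
      fix y assume y: "y \<in> blk n q c"
      then have yn: "y < n" "simq n q c y" by (auto simp: blk_iff)
      define x where "x = inv_into UNIV p y"
      have px: "p x = y" unfolding x_def using permutes_inverses(1)[OF p(1)] by simp
      have xn: "x < n" using permutes_in_image[OF p(1), of x] px yn by simp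
      have "simq n q a0 x" using R1[OF Q S a0(1) c(1) xn yn(1) a0(2)] p(2)[OF xn] px yn by simp
      then show "y \<in> p ` blk n q a0" using xn px by (auto simp: blk_iff)
    qed
    then have "card (blk n q c) = card (blk n q a0)"
      using card_image[OF permutes_inj_on[OF p(1)]] by metis
    then show ?thesis using a0 c by simp
  qed
  have qc: "q (sorted_list_of_set B ! a) (sorted_list_of_set C ! b) =
        q (sorted_list_of_set (bmap g B) ! a) (sorted_list_of_set (bmap g C) ! b)"
    if h: "B \<in> blocks n q" "C \<in> blocks n q" "a < card B" "b < card C" for B C a b
  proof -
    let ?x = "sorted_list_of_set B ! a" and ?y = "sorted_list_of_set C ! b"
    let ?x' = "sorted_list_of_set (bmap g B) ! a" and ?y' = "sorted_list_of_set (bmap g C) ! b"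
    have x: "?x \<in> B" "?y \<in> C" using nth_sorted_mem[OF blocks_finite'[OF h(1)] h(3)] nth_sorted_mem[OF blocks_finite'[OF h(2)] h(4)] by auto
    have xn: "?x < n" "?y < n" using x blocks_sub h by auto
    have x': "?x' \<in> bmap g B" "?y' \<in> bmap g C"
      using nth_sorted_mem[OF blocks_finite'[OF into[OF h(1)]]] nth_sorted_mem[OF blocks_finite'[OF into[OF h(2)]]] h card by auto
    obtain a1 where a1: "a1 < n" "g $$ (a1, ?x) \<noteq> 0" "bmap g (blk n q ?x) = blk n q a1" using bb[OF xn(1)] by auto
    obtain b1 where b1: "b1 < n" "g $$ (b1, ?y) \<noteq> 0" "bmap g (blk n q ?y) = blk n q b1" using bb[OF xn(2)] by auto
    have BB: "B = blk n q ?x" "C = blk n q ?y" using blocks_mem_blk[OF h(1) x(1)] blocks_mem_blk[OF h(2) x(2)] by auto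
    have x'': "?x' \<in> blk n q a1" "?y' \<in> blk n q b1" using x' a1 b1 BB by auto
    have "q ?x ?y = q a1 b1" using K a1 b1 xn unfolding Kc_def by metis
    also have "\<dots> = q ?x' ?y'" by (rule q_const[OF Q]) (use x'' a1 b1 in \<open>auto simp: blk_iff\<close>)
    finally show ?thesis .
  qed
  have "bmap g \<in> Stab n q" unfolding Stab_def using perm card qc by blast
  moreover have "SP n q g (bmap g)" unfolding SP_def
  proof (intro allI impI)
    fix a c assume "a < n" "c < n" "g $$ (a, c) \<noteq> 0"
    then show "a \<in> bmap g (blk n q c)" using bmap_blk[OF S] blk_self by auto
  qed
  ultimately show ?thesis by blast
qed

lemma SP_unique:
  assumes I: "inv_ok n g" and s: "\<sigma> \<in> Stab n q" "\<sigma>' \<in> Stab n q" and sp: "SP n q g \<sigma>" "SP n q g \<sigma>'"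
  shows "\<sigma> = \<sigma>'"
proof
  fix B show "\<sigma> B = \<sigma>' B"
  proof (cases "B \<in> blocks n q")
    case True
    then obtain c where c: "c < n" "B = blk n q c" by (auto simp: blocks_iff)
    obtain a where a: "a < n" "g $$ (a, c) \<noteq> 0" using inv_ok_col[OF I c(1)] by auto
    have "a \<in> \<sigma> B" "a \<in> \<sigma>' B" using sp a c unfolding SP_def by auto
    moreover have "\<sigma> B \<in> blocks n q" "\<sigma>' B \<in> blocks n q" using Stab_blocks[OF Q] s True by auto
    ultimately show ?thesis using blocks_mem_blk by metis
  next
    case False
    then show ?thesis using s permutes_not_in unfolding Stab_def by (metis (no_types, lifting) mem_Collect_eq)
  qed
qed

lemma BD_iota:
  assumes f: "f \<in> BD n q" and s: "\<sigma> \<in> Stab n q"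
  shows "f * iota n q \<sigma> \<in> Sset n q" "SP n q (f * iota n q \<sigma>) \<sigma>"
proof -
  have If: "inv_ok n f" and fc: "f \<in> carrier_mat n n" using f by (auto simp: BD_def inv_ok_def)
  have Ii: "inv_ok n (iota n q \<sigma>)" unfolding inv_ok_def
    using iota_carrier[OF Q] iota_inv[OF Q s] by (auto intro!: bexI[of _ "iota n q (inv_into UNIV \<sigma>)"])
  have e: "(f * iota n q \<sigma>) $$ (a, c) = f $$ (a, pos n q \<sigma> c)" if "a < n" "c < n" for a c
    using mult_iota_right[OF Q s fc that] .
  have sup: "a \<in> blk n q (pos n q \<sigma> c)" if "a < n" "c < n" "(f * iota n q \<sigma>) $$ (a, c) \<noteq> 0" for a c
    using f that e pos_props(2)[OF Q s] unfolding BD_def by auto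
  have "Kc n q (f * iota n q \<sigma>)" unfolding Kc_def
  proof (intro allI impI)
    fix a i b j assume h: "a < n" "i < n" "b < n" "j < n" "(f * iota n q \<sigma>) $$ (a, i) \<noteq> 0" "(f * iota n q \<sigma>) $$ (b, j) \<noteq> 0"
    have "a \<in> blk n q (pos n q \<sigma> i)" "b \<in> blk n q (pos n q \<sigma> j)" using sup h by auto
    then have "q a b = q (pos n q \<sigma> i) (pos n q \<sigma> j)"
      using q_const[OF Q] pos_props(2)[OF Q s] h by (metis blk_iff simq_sym)
    also have "\<dots> = q i j" using pos_q s h by auto
    finally show "q a b = q i j" .
  qed
  then show "f * iota n q \<sigma> \<in> Sset n q" using inv_ok_mult[OF If Ii] by (simp add: Sset_def)
  show "SP n q (f * iota n q \<sigma>) \<sigma>" unfolding SP_def using sup pos_props(3)[OF Q s] by auto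
qed

lemma Sset_BD:
  assumes S: "g \<in> Sset n q" and s: "\<sigma> \<in> Stab n q" and sp: "SP n q g \<sigma>"
  shows "g * iota n q (inv_into UNIV \<sigma>) \<in> BD n q"
proof -
  have s': "inv_into UNIV \<sigma> \<in> Stab n q" using Stab_inv[OF Q s] .
  have Ig: "inv_ok n g" and gc: "g \<in> carrier_mat n n" using S by (auto simp: Sset_def inv_ok_def)
  have Ii: "inv_ok n (iota n q (inv_into UNIV \<sigma>))" unfolding inv_ok_def
    using iota_carrier[OF Q] iota_inv[OF Q s] by (auto intro!: bexI[of _ "iota n q \<sigma>"])
  have p: "\<sigma> permutes blocks n q" using s by (simp add: Stab_def)
  have "a \<in> blk n q i" if h: "a < n" "i < n" "(g * iota n q (inv_into UNIV \<sigma>)) $$ (a, i) \<noteq> 0" for a i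
  proof -
    let ?c = "pos n q (inv_into UNIV \<sigma>) i"
    have "g $$ (a, ?c) \<noteq> 0" using h mult_iota_right[OF Q s' gc h(1,2)] by simp
    moreover have "?c < n" using pos_props(2)[OF Q s' h(2)] .
    ultimately have "a \<in> \<sigma> (blk n q ?c)" using sp h unfolding SP_def by auto
    also have "blk n q ?c = inv_into UNIV \<sigma> (blk n q i)" using pos_props(3)[OF Q s' h(2)] .
    finally show ?thesis using permutes_inverses(1)[OF p] by simp
  qed
  then show ?thesis using inv_ok_mult[OF Ig Ii] unfolding BD_def by auto
qed

end

definition restr :: "nat \<Rightarrow> 'k::field mat \<Rightarrow> nat set \<Rightarrow> 'k mat" where
  "restr n f B = mat n n (\<lambda>(a, i). if i \<in> B then f $$ (a, i) else (if a = i then 1 else 0))"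

lemma sum_delta_n: "b < (n::nat) \<Longrightarrow> (\<Sum>c<n. if c = b then (x::'k::field) else 0) = x"
  by (subst sum.delta) auto

lemma BD_one: "1\<^sub>m n \<in> BD n q"
  unfolding BD_def inv_ok_def by (auto simp: blk_self intro!: bexI[of _ "1\<^sub>m n"])

lemma BD_mult: assumes "f \<in> BD n q" "g \<in> BD n q" shows "f * g \<in> BD n q"
proof -
  have c: "f \<in> carrier_mat n n" "g \<in> carrier_mat n n" using assms by (auto simp: BD_def inv_ok_def)
  have "a \<in> blk n q i" if h: "a < n" "i < n" "(f * g) $$ (a, i) \<noteq> 0" for a i
  proof -
    obtain c where "c < n" "f $$ (a, c) \<noteq> 0" "g $$ (c, i) \<noteq> 0" using mult_entry_nz[OF c h] by auto
    then have "a \<in> blk n q c" "c \<in> blk n q i" using assms h unfolding BD_def by auto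
    then show ?thesis using blk_eq by metis
  qed
  then show ?thesis using inv_ok_mult assms unfolding BD_def by auto
qed

lemma BD_inv:
  fixes f h :: "'k::field mat"
  assumes f: "f \<in> BD n q" and h: "h \<in> carrier_mat n n" "f * h = 1\<^sub>m n" "h * f = 1\<^sub>m n"
  shows "h \<in> BD n q"
proof -
  have fc: "f \<in> carrier_mat n n" using f by (auto simp: BD_def inv_ok_def)
  have "a \<in> blk n q i" if ia: "a < n" "i < n" "h $$ (i, a) \<noteq> 0" for a i
  proof -
    have "simq n q i i \<longleftrightarrow> simq n q i a"
    proof (rule PQ[OF fc h _ ia(2,1,3), where P = "\<lambda>x. simq n q i x" and Q = "\<lambda>y. simq n q i y"])
      fix x y assume xy: "x < n" "y < n" "f $$ (x, y) \<noteq> 0"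
      then have "simq n q y x" using f unfolding BD_def by (auto simp: blk_iff)
      then show "simq n q i x \<longleftrightarrow> simq n q i y" using simq_trans simq_sym by metis
    qed
    then show ?thesis using ia by (simp add: blk_iff simq_refl)
  qed
  then have "a \<in> blk n q i" if ia: "a < n" "i < n" "h $$ (a, i) \<noteq> 0" for a i
    using that by (meson blk_iff simq_sym)
  moreover have "inv_ok n h" unfolding inv_ok_def using h fc by auto
  ultimately show ?thesis unfolding BD_def by auto
qed

lemma GL_on_BD:
  assumes B: "B \<in> blocks n q" and f: "f \<in> GL_on n B"
  shows "f \<in> BD n q"
proof -
  have fc: "f \<in> carrier_mat n n" and inv: "invertible_mat f" using f by (auto simp: GL_on_def)
  have "a \<in> blk n q j" if h: "a < n" "j < n" "f $$ (a, j) \<noteq> 0" for a j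
  proof (cases "j \<in> B")
    case True
    then have "a \<in> B" using f h unfolding GL_on_def by auto
    then show ?thesis using blocks_mem_blk[OF B True] by simp
  next
    case False
    then have "col f j = unit_vec n j" using f h unfolding GL_on_def by auto
    then have "col f j $ a = unit_vec n j $ a" by simp
    then have "f $$ (a, j) = (if a = j then 1 else 0)" using h fc by simp
    then have "a = j" using h by (auto split: if_splits)
    then show ?thesis using h blk_self by simp
  qed
  then show ?thesis using inv_ok_iff[OF fc] inv unfolding BD_def by auto
qed

lemma foldr_BD:
  "set Bs \<subseteq> blocks n q \<Longrightarrow> (\<forall>B\<in>set Bs. f B \<in> GL_on n B) \<Longrightarrow>
    foldr (\<lambda>B M. f B * M) Bs (1\<^sub>m n) \<in> BD n q"
proof (induction Bs)
  case Nil then show ?case by (simp add: BD_one)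
next
  case (Cons B Bs)
  then have "f B \<in> BD n q" using GL_on_BD by auto
  then show ?case using Cons BD_mult by auto
qed

lemma block_prod_BD: "block_prod n q \<subseteq> BD n q"
  unfolding block_prod_def using foldr_BD by blast

lemma restr_carrier: "restr n f B \<in> carrier_mat n n" by (simp add: restr_def)

lemma restr_mult_one:
  fixes f h :: "'k::field mat"
  assumes B: "B \<in> blocks n q" and f: "f \<in> carrier_mat n n" and h: "h \<in> carrier_mat n n"
    and hs: "\<And>c i. c < n \<Longrightarrow> i < n \<Longrightarrow> h $$ (c, i) \<noteq> 0 \<Longrightarrow> c \<in> blk n q i"
    and fh: "f * h = 1\<^sub>m n"
  shows "restr n f B * restr n h B = 1\<^sub>m n"
proof (rule eq_matI)
  fix a i assume "a < dim_row (1\<^sub>m n :: 'k mat)" "i < dim_col (1\<^sub>m n :: 'k mat)"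
  then have ai: "a < n" "i < n" by auto
  have "(restr n f B * restr n h B) $$ (a, i) = (\<Sum>c<n. restr n f B $$ (a, c) * restr n h B $$ (c, i))"
    by (rule mult_entry[OF restr_carrier restr_carrier ai])
  also have "\<dots> = (1\<^sub>m n :: 'k mat) $$ (a, i)"
  proof (cases "i \<in> B")
    case True
    have "(\<Sum>c<n. restr n f B $$ (a, c) * restr n h B $$ (c, i)) = (\<Sum>c<n. f $$ (a, c) * h $$ (c, i))"
    proof (intro sum.cong refl)
      fix c assume c: "c \<in> {..<n}"
      show "restr n f B $$ (a, c) * restr n h B $$ (c, i) = f $$ (a, c) * h $$ (c, i)"
      proof (cases "c \<in> B")
        case False
        then have "h $$ (c, i) = 0" using hs[of c i] c ai True blocks_mem_blk[OF B True] by auto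
        then show ?thesis using c ai True by (simp add: restr_def)
      qed (use c ai True in \<open>simp add: restr_def\<close>)
    qed
    also have "\<dots> = (f * h) $$ (a, i)" using mult_entry[OF f h ai] by simp
    finally show ?thesis using fh by simp
  next
    case False
    have "(\<Sum>c<n. restr n f B $$ (a, c) * restr n h B $$ (c, i)) = (\<Sum>c<n. if c = i then restr n f B $$ (a, i) else 0)"
      by (intro sum.cong refl) (use False ai in \<open>auto simp: restr_def\<close>)
    also have "\<dots> = restr n f B $$ (a, i)" using sum_delta_n ai by simp
    finally show ?thesis using False ai by (simp add: restr_def)
  qed
  finally show "(restr n f B * restr n h B) $$ (a, i) = (1\<^sub>m n :: 'k mat) $$ (a, i)" .
qed (auto simp: restr_def)

lemma restr_GL_on:
  assumes B: "B \<in> blocks n q" and f: "f \<in> BD n q"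
  shows "restr n f B \<in> GL_on n B"
proof -
  obtain h where h: "h \<in> carrier_mat n n" "f * h = 1\<^sub>m n" "h * f = 1\<^sub>m n" and fc: "f \<in> carrier_mat n n"
    using f unfolding BD_def inv_ok_def by auto
  have hB: "h \<in> BD n q" using BD_inv[OF f h] .
  have 1: "restr n f B * restr n h B = 1\<^sub>m n"
    by (rule restr_mult_one[OF B fc h(1) _ h(2)]) (use hB in \<open>auto simp: BD_def\<close>)
  have 2: "restr n h B * restr n f B = 1\<^sub>m n"
    by (rule restr_mult_one[OF B h(1) fc _ h(3)]) (use f in \<open>auto simp: BD_def\<close>)
  have inv: "invertible_mat (restr n f B)"
    using inv_ok_iff[OF restr_carrier] 1 2 restr_carrier unfolding inv_ok_def by blast
  have cols: "col (restr n f B) j = unit_vec n j" if "j < n" "j \<notin> B" for j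
    by (rule eq_vecI) (use that in \<open>auto simp: restr_def\<close>)
  have sup: "i \<in> B" if "j \<in> B" "i < n" "restr n f B $$ (i, j) \<noteq> 0" for i j
  proof -
    have "j < n" using that B blocks_sub by auto
    then have "f $$ (i, j) \<noteq> 0" using that by (simp add: restr_def)
    then have "i \<in> blk n q j" using f that \<open>j < n\<close> unfolding BD_def by auto
    then show ?thesis using blocks_mem_blk[OF B that(1)] by simp
  qed
  show ?thesis unfolding GL_on_def using restr_carrier inv cols sup by auto
qed

lemma foldr_restr:
  assumes f: "f \<in> BD n q"
  shows "distinct Bs \<Longrightarrow> set Bs \<subseteq> blocks n q \<Longrightarrow>
    foldr (\<lambda>B M. restr n f B * M) Bs (1\<^sub>m n) =
      mat n n (\<lambda>(a, i). if i \<in> \<Union>(set Bs) then f $$ (a, i) else (if a = i then 1 else 0))"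
proof (induction Bs)
  case Nil then show ?case by (intro eq_matI) auto
next
  case (Cons B Bs)
  let ?R = "mat n n (\<lambda>(a, i). if i \<in> \<Union>(set Bs) then f $$ (a, i) else (if a = i then 1 else 0)) :: 'a mat"
  have IH: "foldr (\<lambda>B M. restr n f B * M) Bs (1\<^sub>m n) = ?R" using Cons by auto
  have B: "B \<in> blocks n q" and nB: "B \<notin> set Bs" using Cons by auto
  have disj: "B \<inter> \<Union>(set Bs) = {}"
  proof (rule ccontr)
    assume "B \<inter> \<Union>(set Bs) \<noteq> {}"
    then obtain x B' where x: "x \<in> B" "B' \<in> set Bs" "x \<in> B'" by auto
    have B'b: "B' \<in> blocks n q" using x Cons by auto
    have "B = blk n q x" "B' = blk n q x" using blocks_mem_blk[OF B x(1)] blocks_mem_blk[OF B'b x(3)] by auto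
    then show False using x nB by simp
  qed
  have fs: "f $$ (c, i) \<noteq> 0 \<Longrightarrow> c < n \<Longrightarrow> i < n \<Longrightarrow> c \<in> blk n q i" for c i using f unfolding BD_def by auto
  have Rc: "?R \<in> carrier_mat n n" by simp
  let ?T = "mat n n (\<lambda>(a, i). if i \<in> \<Union>(set (B # Bs)) then f $$ (a, i) else (if a = i then 1 else 0)) :: 'a mat"
  have M: "restr n f B * ?R = ?T"
  proof (rule eq_matI)
    fix a i assume "a < dim_row ?T" "i < dim_col ?T"
    then have ai: "a < n" "i < n" by auto
    have "(restr n f B * ?R) $$ (a, i) = (\<Sum>c<n. restr n f B $$ (a, c) * ?R $$ (c, i))"
      by (rule mult_entry[OF restr_carrier Rc ai])
    also have "\<dots> = (if i \<in> \<Union>(set (B # Bs)) then f $$ (a, i) else (if a = i then 1 else 0))"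
    proof (cases "i \<in> \<Union>(set Bs)")
      case True
      then obtain B' where B': "B' \<in> set Bs" "i \<in> B'" by auto
      have B'b: "B' \<in> blocks n q" using B' Cons by auto
      have B'e: "B' = blk n q i" using blocks_mem_blk[OF B'b B'(2)] by auto
      have "(\<Sum>c<n. restr n f B $$ (a, c) * ?R $$ (c, i)) = (\<Sum>c<n. if c = a then f $$ (a, i) else 0)"
      proof (intro sum.cong refl)
        fix c assume c: "c \<in> {..<n}"
        show "restr n f B $$ (a, c) * ?R $$ (c, i) = (if c = a then f $$ (a, i) else 0)"
        proof (cases "c \<in> B")
          case True
          then have "c \<notin> blk n q i" using disj B' B'e by auto
          then have "f $$ (c, i) = 0" using fs c ai by auto
          then show ?thesis using c ai \<open>i \<in> \<Union>(set Bs)\<close> by (auto simp: restr_def)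
        qed (use c ai \<open>i \<in> \<Union>(set Bs)\<close> in \<open>auto simp: restr_def\<close>)
      qed
      also have "\<dots> = f $$ (a, i)" using sum_delta_n ai by simp
      finally show ?thesis using True by simp
    next
      case False
      have "(\<Sum>c<n. restr n f B $$ (a, c) * ?R $$ (c, i)) = (\<Sum>c<n. if c = i then restr n f B $$ (a, i) else 0)"
        by (intro sum.cong refl) (use False ai in \<open>auto\<close>)
      also have "\<dots> = restr n f B $$ (a, i)" using sum_delta_n ai by simp
      finally show ?thesis using False ai by (auto simp: restr_def)
    qed
    finally show "(restr n f B * ?R) $$ (a, i) = ?T $$ (a, i)" using ai by simp
  qed (auto simp: restr_def)
  show ?case using IH M by simp
qed

lemma BD_block_prod:
  assumes f: "f \<in> BD n q" shows "f \<in> block_prod n q"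
proof -
  obtain Bs where Bs: "set Bs = blocks n q" "distinct Bs" using finite_distinct_list[OF blocks_finite] by blast
  have fc: "f \<in> carrier_mat n n" using f by (auto simp: BD_def inv_ok_def)
  have "foldr (\<lambda>B M. restr n f B * M) Bs (1\<^sub>m n) =
      mat n n (\<lambda>(a, i). if i \<in> \<Union>(set Bs) then f $$ (a, i) else (if a = i then 1 else 0))"
    using foldr_restr[OF f Bs(2)] Bs by simp
  also have "\<dots> = f" using fc Bs(1) blocks_Union[of n q] by (intro eq_matI) auto
  finally have "f = foldr (\<lambda>B M. restr n f B * M) Bs (1\<^sub>m n)" by simp
  moreover have "\<forall>B\<in>blocks n q. restr n f B \<in> GL_on n B" using restr_GL_on f by blast
  ultimately show ?thesis unfolding block_prod_def using Bs by blast
qed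

definition Wd :: "nat \<Rightarrow> nat \<Rightarrow> nat list set" where
  "Wd n L = {w. set w \<subseteq> {..<n} \<and> length w = L}"

fun wt :: "'k::field mat \<Rightarrow> nat list \<Rightarrow> nat list \<Rightarrow> 'k" where
  "wt g (a # u) (b # w) = g $$ (a, b) * wt g u w"
| "wt g _ _ = 1"

definition phi :: "nat \<Rightarrow> 'k::field mat \<Rightarrow> (nat list \<Rightarrow> 'k) \<Rightarrow> nat list \<Rightarrow> 'k" where
  "phi n g x u = (if set u \<subseteq> {..<n} then (\<Sum>w\<in>Wd n (length u). x w * wt g u w) else 0)"

lemma Wd_finite: "finite (Wd n L)"
  unfolding Wd_def using finite_lists_length_eq[of "{..<n}" L] by simp

lemma Wd_0: "Wd n 0 = {[]}" by (auto simp: Wd_def)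

lemma Wd_Suc: "Wd n (Suc L) = (\<lambda>(m, w). m # w) ` ({..<n} \<times> Wd n L)"
proof (intro equalityI subsetI)
  fix v assume "v \<in> Wd n (Suc L)"
  then obtain m w where "v = m # w" "m < n" "w \<in> Wd n L" by (cases v) (auto simp: Wd_def)
  then show "v \<in> (\<lambda>(m, w). m # w) ` ({..<n} \<times> Wd n L)" by force
qed (auto simp: Wd_def)

lemma sum_Wd_Suc: "(\<Sum>w\<in>Wd n (Suc L). f w) = (\<Sum>m<n. \<Sum>w\<in>Wd n L. f (m # w))"
proof -
  have inj: "inj_on (\<lambda>(m, w). m # w) ({..<n} \<times> Wd n L)" by (auto simp: inj_on_def)
  have "(\<Sum>w\<in>Wd n (Suc L). f w) = (\<Sum>p\<in>{..<n} \<times> Wd n L. f ((\<lambda>(m, w). m # w) p))"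
    unfolding Wd_Suc by (rule sum.reindex[OF inj, unfolded comp_def])
  also have "\<dots> = (\<Sum>m<n. \<Sum>w\<in>Wd n L. f (m # w))"
    by (simp only: sum.cartesian_product) (simp add: split_def)
  finally show ?thesis .
qed

lemma sum_Wd_add: "(\<Sum>w\<in>Wd n (k + l). f w) = (\<Sum>w1\<in>Wd n k. \<Sum>w2\<in>Wd n l. f (w1 @ w2))"
proof (induction k arbitrary: f)
  case 0 then show ?case by (simp add: Wd_0)
next
  case (Suc k)
  have "(\<Sum>w\<in>Wd n (Suc k + l). f w) = (\<Sum>m<n. \<Sum>w\<in>Wd n (k + l). f (m # w))"
    using sum_Wd_Suc[where n=n and L="k + l" and f=f] by simp
  also have "\<dots> = (\<Sum>m<n. \<Sum>w1\<in>Wd n k. \<Sum>w2\<in>Wd n l. f (m # w1 @ w2))"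
    using Suc.IH by simp
  also have "\<dots> = (\<Sum>w1\<in>Wd n (Suc k). \<Sum>w2\<in>Wd n l. f (w1 @ w2))"
    using sum_Wd_Suc[where n=n and L=k and f="\<lambda>w1. \<Sum>w2\<in>Wd n l. f (w1 @ w2)"] by simp
  finally show ?case .
qed

lemma wt_append: "length u1 = length w1 \<Longrightarrow> wt g (u1 @ u2) (w1 @ w2) = wt g u1 w1 * wt g u2 w2"
  by (induction u1 w1 rule: list_induct2) auto

lemma phi_mult: "phi n g (fa_mult x y) = fa_mult (phi n g x) (phi n g y)"
proof
  fix u :: "nat list"
  let ?L = "length u"
  show "phi n g (fa_mult x y) u = fa_mult (phi n g x) (phi n g y) u"
  proof (cases "set u \<subseteq> {..<n}")
    case True
    have "phi n g (fa_mult x y) u = (\<Sum>w\<in>Wd n ?L. (\<Sum>k\<le>?L. x (take k w) * y (drop k w)) * wt g u w)"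
      using True unfolding phi_def fa_mult_def
      apply simp apply (intro sum.cong) apply (auto simp: Wd_def) done
    also have "\<dots> = (\<Sum>k\<le>?L. \<Sum>w\<in>Wd n ?L. x (take k w) * y (drop k w) * wt g u w)"
      by (simp add: sum_distrib_right sum.swap[of _ "Wd n ?L"])
    also have "\<dots> = (\<Sum>k\<le>?L. phi n g x (take k u) * phi n g y (drop k u))"
    proof (intro sum.cong refl)
      fix k assume k: "k \<in> {..?L}"
      then have L: "?L = k + (?L - k)" by simp
      have "(\<Sum>w\<in>Wd n ?L. x (take k w) * y (drop k w) * wt g u w)
          = (\<Sum>w1\<in>Wd n k. \<Sum>w2\<in>Wd n (?L - k). x (take k (w1 @ w2)) * y (drop k (w1 @ w2)) * wt g u (w1 @ w2))"
        by (subst L, subst sum_Wd_add) (simp add: L[symmetric])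
      also have "\<dots> = (\<Sum>w1\<in>Wd n k. \<Sum>w2\<in>Wd n (?L - k).
            (x w1 * wt g (take k u) w1) * (y w2 * wt g (drop k u) w2))"
      proof (intro sum.cong refl)
        fix w1 w2 assume w: "w1 \<in> Wd n k" "w2 \<in> Wd n (?L - k)"
        then have lw: "length w1 = k" by (simp add: Wd_def)
        have "wt g u (w1 @ w2) = wt g (take k u @ drop k u) (w1 @ w2)" by simp
        also have "\<dots> = wt g (take k u) w1 * wt g (drop k u) w2"
          using lw k by (intro wt_append) auto
        finally show "x (take k (w1 @ w2)) * y (drop k (w1 @ w2)) * wt g u (w1 @ w2) =
            (x w1 * wt g (take k u) w1) * (y w2 * wt g (drop k u) w2)" using lw by (simp add: ac_simps)
      qed
      also have "\<dots> = (\<Sum>w1\<in>Wd n k. x w1 * wt g (take k u) w1) * (\<Sum>w2\<in>Wd n (?L - k). y w2 * wt g (drop k u) w2)"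
        by (simp add: sum_product)
      also have "\<dots> = phi n g x (take k u) * phi n g y (drop k u)"
        using True k set_take_subset[of k u] set_drop_subset[of k u] unfolding phi_def
        by (simp add: min_def)
      finally show "(\<Sum>w\<in>Wd n ?L. x (take k w) * y (drop k w) * wt g u w) = phi n g x (take k u) * phi n g y (drop k u)" .
    qed
    finally show ?thesis unfolding fa_mult_def .
  next
    case False
    have "phi n g x (take k u) * phi n g y (drop k u) = 0" for k
    proof -
      have "\<not> set (take k u) \<subseteq> {..<n} \<or> \<not> set (drop k u) \<subseteq> {..<n}"
        using False by (metis append_take_drop_id set_append Un_subset_iff)
      then show ?thesis unfolding phi_def by auto
    qed
    then have "fa_mult (phi n g x) (phi n g y) u = 0" unfolding fa_mult_def by (intro sum.neutral) auto
    then show ?thesis using False unfolding phi_def by simp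
  qed
qed

lemma wt_comp:
  assumes g: "g \<in> carrier_mat n n" and h: "h \<in> carrier_mat n n"
  shows "length u = L \<Longrightarrow> length w' = L \<Longrightarrow> set u \<subseteq> {..<n} \<Longrightarrow> set w' \<subseteq> {..<n} \<Longrightarrow>
    (\<Sum>w\<in>Wd n L. wt h u w * wt g w w') = wt (h * g) u w'"
proof (induction L arbitrary: u w')
  case 0 then show ?case by (simp add: Wd_0)
next
  case (Suc L)
  obtain a u1 where u: "u = a # u1" using Suc by (cases u) auto
  obtain b w1 where w: "w' = b # w1" using Suc by (cases w') auto
  have ab: "a < n" "b < n" "length u1 = L" "length w1 = L" "set u1 \<subseteq> {..<n}" "set w1 \<subseteq> {..<n}"
    using Suc u w by auto
  have "(\<Sum>w\<in>Wd n (Suc L). wt h u w * wt g w w') = (\<Sum>m<n. \<Sum>w\<in>Wd n L. (h $$ (a, m) * g $$ (m, b)) * (wt h u1 w * wt g w w1))"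
    unfolding sum_Wd_Suc u w by (simp add: ac_simps)
  also have "\<dots> = (\<Sum>m<n. h $$ (a, m) * g $$ (m, b)) * wt (h * g) u1 w1"
    using Suc.IH[OF ab(3,4,5,6)] by (simp add: sum_distrib_left[symmetric] sum_distrib_right)
  also have "\<dots> = wt (h * g) u w'" using mult_entry[OF h g ab(1,2)] u w by simp
  finally show ?case .
qed

lemma wt_one:
  "length u = length w \<Longrightarrow> set u \<subseteq> {..<n} \<Longrightarrow> set w \<subseteq> {..<n} \<Longrightarrow>
    wt (1\<^sub>m n :: 'k::field mat) u w = (if u = w then 1 else 0)"
  by (induction u w rule: list_induct2) auto

lemma phi_comp:
  assumes g: "g \<in> carrier_mat n n" and h: "h \<in> carrier_mat n n"
  shows "phi n h (phi n g x) = phi n (h * g) x"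
proof
  fix u :: "nat list"
  show "phi n h (phi n g x) u = phi n (h * g) x u"
  proof (cases "set u \<subseteq> {..<n}")
    case True
    let ?L = "length u"
    have "phi n h (phi n g x) u = (\<Sum>w\<in>Wd n ?L. phi n g x w * wt h u w)"
      using True by (simp add: phi_def)
    also have "\<dots> = (\<Sum>w\<in>Wd n ?L. (\<Sum>w'\<in>Wd n ?L. x w' * wt g w w') * wt h u w)"
    proof (rule sum.cong[OF refl])
      fix w assume "w \<in> Wd n ?L"
      then have w: "set w \<subseteq> {..<n}" "length w = ?L" by (auto simp: Wd_def)
      show "phi n g x w * wt h u w = (\<Sum>w'\<in>Wd n ?L. x w' * wt g w w') * wt h u w"
        unfolding phi_def using w by simp
    qed
    also have "\<dots> = (\<Sum>w'\<in>Wd n ?L. x w' * (\<Sum>w\<in>Wd n ?L. wt h u w * wt g w w'))"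
    proof -
      have "(\<Sum>w\<in>Wd n ?L. (\<Sum>w'\<in>Wd n ?L. x w' * wt g w w') * wt h u w)
          = (\<Sum>w\<in>Wd n ?L. \<Sum>w'\<in>Wd n ?L. x w' * (wt h u w * wt g w w'))"
        unfolding sum_distrib_right by (intro sum.cong refl) (simp add: ac_simps)
      also have "\<dots> = (\<Sum>w'\<in>Wd n ?L. \<Sum>w\<in>Wd n ?L. x w' * (wt h u w * wt g w w'))"
        by (rule sum.swap)
      also have "\<dots> = (\<Sum>w'\<in>Wd n ?L. x w' * (\<Sum>w\<in>Wd n ?L. wt h u w * wt g w w'))"
        by (simp add: sum_distrib_left)
      finally show ?thesis .
    qed
    also have "\<dots> = (\<Sum>w'\<in>Wd n ?L. x w' * wt (h * g) u w')"
      by (intro sum.cong refl) (use wt_comp[OF g h] True in \<open>auto simp: Wd_def\<close>)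
    finally show ?thesis using True unfolding phi_def by simp
  qed (simp add: phi_def)
qed

lemma phi_one:
  assumes x: "x \<in> fa_carrier n"
  shows "phi n (1\<^sub>m n) x = x"
proof
  fix u :: "nat list"
  show "phi n (1\<^sub>m n) x u = x u"
  proof (cases "set u \<subseteq> {..<n}")
    case True
    have "phi n (1\<^sub>m n) x u = (\<Sum>w\<in>Wd n (length u). if w = u then x u else 0)"
      using True unfolding phi_def
      apply simp apply (intro sum.cong) apply (auto simp: Wd_def wt_one) done
    also have "\<dots> = x u" using True Wd_finite by (simp add: Wd_def)
    finally show ?thesis .
  next
    case False
    then show ?thesis using x unfolding phi_def fa_carrier_def by auto
  qed
qed

lemma phi_carrier:
  assumes x: "x \<in> fa_carrier n"
  shows "phi n g x \<in> fa_carrier n"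
proof -
  let ?S = "{w. x w \<noteq> 0}"
  have fin: "finite ?S" using x by (simp add: fa_carrier_def)
  have "{u. phi n g x u \<noteq> 0} \<subseteq> (\<Union>L\<in>length ` ?S. Wd n L)"
  proof
    fix u assume "u \<in> {u. phi n g x u \<noteq> 0}"
    then have u: "set u \<subseteq> {..<n}" "(\<Sum>w\<in>Wd n (length u). x w * wt g u w) \<noteq> 0"
      unfolding phi_def by (auto split: if_splits)
    obtain w where "w \<in> Wd n (length u)" "x w * wt g u w \<noteq> 0"
      by (rule sum.not_neutral_contains_not_neutral[OF u(2)])
    then have "w \<in> Wd n (length u)" "x w \<noteq> 0" by auto
    then show "u \<in> (\<Union>L\<in>length ` ?S. Wd n L)" using u by (auto simp: Wd_def)
  qed
  moreover have "finite (\<Union>L\<in>length ` ?S. Wd n L)" using fin Wd_finite by auto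
  ultimately have "finite {u. phi n g x u \<noteq> 0}" by (rule finite_subset)
  then show ?thesis unfolding fa_carrier_def phi_def by auto
qed

lemma phi_add: "phi n g (fa_add x y) = fa_add (phi n g x) (phi n g y)"
  by (auto simp: phi_def fa_add_def sum.distrib algebra_simps intro!: ext)

lemma phi_smult: "phi n g (fa_smult c x) = fa_smult c (phi n g x)"
  by (auto simp: phi_def fa_smult_def sum_distrib_left algebra_simps intro!: ext)

lemma phi_sub: "phi n g (fa_sub x y) = fa_sub (phi n g x) (phi n g y)"
  by (auto simp: phi_def fa_sub_def sum_subtractf algebra_simps intro!: ext)

lemma phi_zero: "phi n g (\<lambda>w. 0) = (\<lambda>w. 0)"
  by (auto simp: phi_def intro!: ext)

lemma phi_fa_one: "phi n g fa_one = fa_one"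
proof
  fix u show "phi n g fa_one u = fa_one u"
  proof (cases "u = []")
    case True then show ?thesis by (simp add: phi_def Wd_0 fa_one_def)
  next
    case False
    then have "phi n g fa_one u = 0" unfolding phi_def fa_one_def
      by (auto simp: Wd_def intro!: sum.neutral)
    then show ?thesis using False by (simp add: fa_one_def)
  qed
qed

lemma phi_gen:
  assumes j: "j < n"
  shows "phi n g (fa_gen j) = (\<lambda>w. \<Sum>i<n. g $$ (i, j) * fa_gen i w)"
proof
  fix u show "phi n g (fa_gen j) u = (\<Sum>i<n. g $$ (i, j) * fa_gen i u)"
  proof (cases "\<exists>a. u = [a] \<and> a < n")
    case True
    then obtain a where a: "u = [a]" "a < n" by auto
    have "phi n g (fa_gen j) u = (\<Sum>w\<in>Wd n (length u). if w = [j] then g $$ (a, j) else 0)"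
      unfolding phi_def fa_gen_def using a
      apply simp apply (intro sum.cong refl) apply auto done
    also have "\<dots> = g $$ (a, j)" using j a Wd_finite[of n "length u"] by (simp add: Wd_def)
    also have "\<dots> = (\<Sum>i<n. g $$ (i, j) * fa_gen i u)"
    proof -
      have "(\<Sum>i<n. g $$ (i, j) * fa_gen i u) = (\<Sum>i<n. if i = a then g $$ (a, j) else 0)"
        using a by (intro sum.cong refl) (auto simp: fa_gen_def)
      then show ?thesis using a by (simp add: sum.delta)
    qed
    finally show ?thesis .
  next
    case False
    have "phi n g (fa_gen j) u = 0"
    proof (cases "set u \<subseteq> {..<n}")
      case True
      then have "length u \<noteq> 1" using False by (auto simp: length_Suc_conv)
      then show ?thesis unfolding phi_def fa_gen_def by (auto simp: Wd_def intro!: sum.neutral)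
    qed (simp add: phi_def)
    moreover have "(\<Sum>i<n. g $$ (i, j) * fa_gen i u) = 0" using False by (auto simp: fa_gen_def intro!: sum.neutral)
    ultimately show ?thesis by simp
  qed
qed

lemma phi_homog:
  assumes "fa_homog n d x" shows "fa_homog n d (phi n g x)"
proof -
  have "length u = d" if "phi n g x u \<noteq> 0" for u
  proof -
    from that have u: "set u \<subseteq> {..<n}" "(\<Sum>w\<in>Wd n (length u). x w * wt g u w) \<noteq> 0"
      unfolding phi_def by (auto split: if_splits)
    obtain w where "w \<in> Wd n (length u)" "x w * wt g u w \<noteq> 0"
      by (rule sum.not_neutral_contains_not_neutral[OF u(2)])
    then have "w \<in> Wd n (length u)" "x w \<noteq> 0" by auto
    then show ?thesis using assms by (auto simp: Wd_def fa_homog_def)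
  qed
  then show ?thesis using phi_carrier assms by (auto simp: fa_homog_def)
qed

lemma fa_mult_nil: "fa_mult f g [] = f [] * g []"
  by (simp add: fa_mult_def)

lemma fa_mult_1: "fa_mult f g [x] = f [] * g [x] + f [x] * g []"
  by (simp add: fa_mult_def)

lemma fa_mult_2: "fa_mult f g [x, y] = f [] * g [x, y] + f [x] * g [y] + f [x, y] * g []"
  by (simp add: fa_mult_def numeral_2_eq_2 atMost_Suc)

lemma zero_carrier: "(\<lambda>w. 0) \<in> fa_carrier n" by (simp add: fa_carrier_def)
lemma one_carrier: "fa_one \<in> fa_carrier n" by (simp add: fa_carrier_def fa_one_def)
lemma gen_carrier: "i < n \<Longrightarrow> fa_gen i \<in> fa_carrier n"
  by (simp add: fa_carrier_def fa_gen_def)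

lemma fa_mult_one_left: "fa_mult fa_one x = x"
proof
  fix w :: "nat list"
  have "fa_mult fa_one x w = (\<Sum>i\<le>length w. if i = 0 then x w else 0)"
    unfolding fa_mult_def fa_one_def by (intro sum.cong refl) auto
  then show "fa_mult fa_one x w = x w" by simp
qed

lemma fa_mult_one_right: "fa_mult x fa_one = x"
proof
  fix w :: "nat list"
  have "fa_mult x fa_one w = (\<Sum>i\<le>length w. if i = length w then x w else 0)"
    unfolding fa_mult_def fa_one_def by (intro sum.cong refl) auto
  then show "fa_mult x fa_one w = x w" by simp
qed

lemma sq_rel_val:
  "sq_rel q i j w = (if w = [j, i] then 1 else 0) - q i j * (if w = [i, j] then 1 else 0)"
proof -
  have g: "fa_mult (fa_gen a) (fa_gen b) w = (if w = [a, b] then 1 else 0)" for a b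
  proof (cases w)
    case Nil then show ?thesis by (simp add: fa_mult_nil fa_gen_def)
  next
    case (Cons x w1)
    show ?thesis
    proof (cases w1)
      case Nil then show ?thesis using Cons by (simp add: fa_mult_1 fa_gen_def)
    next
      case (Cons y w2)
      show ?thesis
      proof (cases w2)
        case Nil then show ?thesis using Cons \<open>w = x # w1\<close> by (simp add: fa_mult_2 fa_gen_def)
      next
        case (Cons z w3)
        have "fa_mult (fa_gen a) (fa_gen b) w = (\<Sum>k\<le>length w. 0)"
          unfolding fa_mult_def fa_gen_def
          by (intro sum.cong refl) (use \<open>w = x # w1\<close> \<open>w1 = y # w2\<close> Cons in \<open>auto simp: take_Cons' drop_Cons'\<close>)
        then show ?thesis using \<open>w = x # w1\<close> \<open>w1 = y # w2\<close> Cons by simp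
      qed
    qed
  qed
  show ?thesis unfolding sq_rel_def fa_sub_def fa_smult_def g ..
qed

lemma sq_rel_carrier: "i < n \<Longrightarrow> j < n \<Longrightarrow> sq_rel q i j \<in> fa_carrier n"
proof -
  assume ij: "i < n" "j < n"
  have sub: "{w. sq_rel q i j w \<noteq> 0} \<subseteq> {[j, i], [i, j]}"
  proof
    fix w assume "w \<in> {w. sq_rel q i j w \<noteq> 0}"
    then have "sq_rel q i j w \<noteq> 0" by simp
    then show "w \<in> {[j, i], [i, j]}" unfolding sq_rel_val by (simp split: if_splits)
  qed
  have "finite {w. sq_rel q i j w \<noteq> 0}" by (rule finite_subset[OF sub]) simp
  moreover have "set w \<subseteq> {..<n}" if "sq_rel q i j w \<noteq> 0" for w
    using sub that ij by auto
  ultimately show ?thesis unfolding fa_carrier_def by auto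
qed

lemma sq_rel_homog: "i < n \<Longrightarrow> j < n \<Longrightarrow> fa_homog n 2 (sq_rel q i j)"
  unfolding fa_homog_def using sq_rel_carrier by (simp add: sq_rel_val split: if_splits)

lemma sq_rel_I: "i < n \<Longrightarrow> j < n \<Longrightarrow> sq_rel q i j \<in> sq_ideal n q"
  using sq_ideal.gen[OF one_carrier one_carrier, of i n j q] by (simp add: fa_mult_one_left fa_mult_one_right)

lemma I_smult: "x \<in> sq_ideal n q \<Longrightarrow> fa_smult c x \<in> sq_ideal n q"
proof (induction rule: sq_ideal.induct)
  case zero then show ?case using sq_ideal.zero by (simp add: fa_smult_def)
next
  case (add x y)
  have "fa_smult c (fa_add x y) = fa_add (fa_smult c x) (fa_smult c y)"
    by (auto simp: fa_smult_def fa_add_def algebra_simps)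
  then show ?case using add sq_ideal.add by metis
next
  case (gen a b i j)
  have ca: "fa_smult c a \<in> fa_carrier n" using gen by (auto simp: fa_carrier_def fa_smult_def)
  have "fa_smult c (fa_mult (fa_mult a (sq_rel q i j)) b) = fa_mult (fa_mult (fa_smult c a) (sq_rel q i j)) b"
    by (auto simp: fa_smult_def fa_mult_def sum_distrib_left sum_distrib_right algebra_simps intro!: ext)
  then show ?case using sq_ideal.gen[OF ca gen(2,3,4)] by simp
qed

lemma I_add: "x \<in> sq_ideal n q \<Longrightarrow> y \<in> sq_ideal n q \<Longrightarrow> fa_add x y \<in> sq_ideal n q"
  by (rule sq_ideal.add)

lemma I_sub: "x \<in> sq_ideal n q \<Longrightarrow> y \<in> sq_ideal n q \<Longrightarrow> fa_sub x y \<in> sq_ideal n q"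
proof -
  assume xy: "x \<in> sq_ideal n q" "y \<in> sq_ideal n q"
  have "fa_sub x y = fa_add x (fa_smult (-1) y)" by (auto simp: fa_sub_def fa_add_def fa_smult_def)
  then show ?thesis using xy I_smult I_add by metis
qed

lemma I_zero': "f = (\<lambda>w. 0) \<Longrightarrow> f \<in> sq_ideal n q" using sq_ideal.zero by simp

lemma I_sum: "finite P \<Longrightarrow> (\<And>p. p \<in> P \<Longrightarrow> X p \<in> sq_ideal n q) \<Longrightarrow> (\<lambda>w. \<Sum>p\<in>P. X p w) \<in> sq_ideal n q"
proof (induction P rule: finite_induct)
  case empty then show ?case using sq_ideal.zero by simp
next
  case (insert p P)
  have "(\<lambda>w. \<Sum>p\<in>insert p P. X p w) = fa_add (X p) (\<lambda>w. \<Sum>p\<in>P. X p w)"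
    using insert by (auto simp: fa_add_def intro!: ext)
  moreover have "fa_add (X p) (\<lambda>w. \<Sum>p\<in>P. X p w) \<in> sq_ideal n q"
    using insert by (intro sq_ideal.add) auto
  ultimately show ?case by simp
qed

lemma fa_mult_sum_right: "finite P \<Longrightarrow> fa_mult A (\<lambda>w. \<Sum>p\<in>P. F p w) = (\<lambda>w. \<Sum>p\<in>P. fa_mult A (F p) w)"
  by (auto simp: fa_mult_def sum_distrib_left intro!: ext sum.swap)

lemma fa_mult_sum_left: "finite P \<Longrightarrow> fa_mult (\<lambda>w. \<Sum>p\<in>P. F p w) B = (\<lambda>w. \<Sum>p\<in>P. fa_mult (F p) B w)"
  by (auto simp: fa_mult_def sum_distrib_right intro!: ext sum.swap)

lemma fa_mult_smult_right: "fa_mult A (\<lambda>w. c * F w) = (\<lambda>w. c * fa_mult A F w)"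
  by (auto simp: fa_mult_def sum_distrib_left algebra_simps intro!: ext)

lemma fa_mult_smult_left: "fa_mult (\<lambda>w. c * F w) B = (\<lambda>w. c * fa_mult F B w)"
  by (auto simp: fa_mult_def sum_distrib_left algebra_simps intro!: ext)

lemma I_sandwich:
  assumes A: "A \<in> fa_carrier n" and B: "B \<in> fa_carrier n" and P: "finite P"
    and ij: "\<And>p. p \<in> P \<Longrightarrow> fst p < n \<and> snd p < n"
  shows "fa_mult (fa_mult A (\<lambda>w. \<Sum>p\<in>P. c p * sq_rel q (fst p) (snd p) w)) B \<in> sq_ideal n q"
proof -
  have "fa_mult (fa_mult A (\<lambda>w. \<Sum>p\<in>P. c p * sq_rel q (fst p) (snd p) w)) B
      = (\<lambda>w. \<Sum>p\<in>P. c p * fa_mult (fa_mult A (sq_rel q (fst p) (snd p))) B w)"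
    by (simp add: fa_mult_sum_right[OF P] fa_mult_sum_left[OF P] fa_mult_smult_right fa_mult_smult_left)
  also have "\<dots> \<in> sq_ideal n q"
  proof (rule I_sum[OF P])
    fix p assume "p \<in> P"
    then have "fa_mult (fa_mult A (sq_rel q (fst p) (snd p))) B \<in> sq_ideal n q"
      using sq_ideal.gen[OF A B] ij by auto
    then show "(\<lambda>w. c p * fa_mult (fa_mult A (sq_rel q (fst p) (snd p))) B w) \<in> sq_ideal n q"
      using I_smult[of _ n q "c p"] unfolding fa_smult_def by blast
  qed
  finally show ?thesis .
qed

definition lam :: "(nat \<Rightarrow> nat \<Rightarrow> 'k::field) \<Rightarrow> nat \<Rightarrow> nat \<Rightarrow> (nat list \<Rightarrow> 'k) \<Rightarrow> 'k" where
  "lam q a b x = x [a, b] + (if a = b then 0 else q a b * x [b, a])"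

lemma lam_add: "lam q a b (fa_add x y) = lam q a b x + lam q a b y"
  by (simp add: lam_def fa_add_def algebra_simps)
lemma lam_smult: "lam q a b (fa_smult c x) = c * lam q a b x"
  by (simp add: lam_def fa_smult_def algebra_simps)
lemma lam_sub: "lam q a b (fa_sub x y) = lam q a b x - lam q a b y"
  by (simp add: lam_def fa_sub_def algebra_simps)

lemma lam_mult: "lam q a b (fa_mult X Y) = X [] * lam q a b Y + X [a] * Y [b]
   + (if a = b then 0 else q a b * X [b] * Y [a]) + lam q a b X * Y []"
  by (simp add: lam_def fa_mult_2 algebra_simps)

lemma I_vanish:
  assumes Q: "qpm n q"
  shows "x \<in> sq_ideal n q \<Longrightarrow> x [] = 0 \<and> (\<forall>i. x [i] = 0) \<and> (\<forall>a<n. \<forall>b<n. lam q a b x = 0)"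
proof (induction rule: sq_ideal.induct)
  case zero then show ?case by (simp add: lam_def)
next
  case (add x y) then show ?case by (simp add: lam_add) (simp add: fa_add_def)
next
  case (gen a b i j)
  let ?r = "sq_rel q i j"
  have r0: "?r [] = 0" "?r [k] = 0" for k by (simp_all add: sq_rel_val)
  have lr: "lam q x y ?r = 0" if "x < n" "y < n" for x y
  proof -
    have qq: "q i i = 1" "q j j = 1" "q i j * q j i = 1" using Q gen by (auto simp: qpm_def)
    show ?thesis unfolding lam_def sq_rel_val using qq
      by (cases "x = y"; cases "x = i"; cases "y = j"; cases "x = j"; cases "y = i") (simp_all add: algebra_simps)
  qed
  let ?X = "fa_mult a ?r"
  have X: "?X [] = 0" "?X [k] = 0" "lam q x y ?X = a [] * lam q x y ?r" for k x y
    by (simp_all add: fa_mult_nil fa_mult_1 lam_mult r0)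
  show ?case using X lr by (simp add: fa_mult_nil fa_mult_1 lam_mult r0)
qed

definition Gv :: "nat \<Rightarrow> 'k::field mat \<Rightarrow> nat \<Rightarrow> nat list \<Rightarrow> 'k" where
  "Gv n g k = (\<lambda>w. \<Sum>l<n. g $$ (l, k) * fa_gen l w)"

lemma Gv_nil: "Gv n g k [] = 0" by (simp add: Gv_def fa_gen_def)
lemma Gv_1: "x < n \<Longrightarrow> Gv n g k [x] = g $$ (x, k)"
proof -
  assume x: "x < n"
  have "Gv n g k [x] = (\<Sum>l<n. if l = x then g $$ (x, k) else 0)"
    unfolding Gv_def fa_gen_def by (intro sum.cong refl) auto
  then show ?thesis using x by simp
qed
lemma Gv_1': "\<not> x < n \<Longrightarrow> Gv n g k [x] = 0"
  unfolding Gv_def fa_gen_def by (intro sum.neutral) auto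
lemma Gv_2: "Gv n g k [x, y] = 0" by (simp add: Gv_def fa_gen_def)
lemma lam_Gv: "lam q a b (Gv n g k) = 0" by (simp add: lam_def Gv_2)

context
  fixes n :: nat and q :: "nat \<Rightarrow> nat \<Rightarrow> 'k::field"
  assumes Q: "qpm n q"
begin

lemma span:
  fixes X :: "nat list \<Rightarrow> 'k"
  assumes supp: "\<And>w. X w \<noteq> 0 \<Longrightarrow> length w = 2 \<and> set w \<subseteq> {..<n}"
   and diag: "\<And>a. a < n \<Longrightarrow> X [a, a] = 0"
   and off: "\<And>a b. a < n \<Longrightarrow> b < n \<Longrightarrow> a \<noteq> b \<Longrightarrow> X [a, b] + q a b * X [b, a] = 0"
  shows "X = (\<lambda>w. \<Sum>p\<in>{..<n}\<times>{..<n}. (if fst p < snd p then X [snd p, fst p] else 0) * sq_rel q (fst p) (snd p) w)"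
proof
  fix w :: "nat list"
  let ?P = "{..<n}\<times>{..<n}"
  show "X w = (\<Sum>p\<in>?P. (if fst p < snd p then X [snd p, fst p] else 0) * sq_rel q (fst p) (snd p) w)"
  proof (cases "\<exists>x y. w = [x, y] \<and> x < n \<and> y < n")
    case True
    then obtain x y where w: "w = [x, y]" "x < n" "y < n" by auto
    have t: "(if fst p < snd p then X [snd p, fst p] else 0) * sq_rel q (fst p) (snd p) w =
        (if p = (y, x) then (if y < x then X [x, y] else 0) else 0) +
        (if p = (x, y) then (if x < y then - (q x y * X [y, x]) else 0) else 0)" for p
    proof -
      obtain a b where p: "p = (a, b)" by (cases p)
      show ?thesis unfolding p w sq_rel_val
        by (cases "a < b"; cases "a = y"; cases "b = x"; cases "a = x"; cases "b = y") simp_all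
    qed
    have "(\<Sum>p\<in>?P. (if fst p < snd p then X [snd p, fst p] else 0) * sq_rel q (fst p) (snd p) w)
      = (if y < x then X [x, y] else 0) + (if x < y then - (q x y * X [y, x]) else 0)"
      unfolding t sum.distrib using w by (simp only: sum.delta finite_SigmaI finite_lessThan) simp
    also have "\<dots> = X w"
    proof -
      consider "y < x" | "x < y" | "x = y" by linarith
      then show ?thesis
      proof cases
        case 2
        then have "X [x, y] + q x y * X [y, x] = 0" using off w by simp
        then have "X [x, y] = - (q x y * X [y, x])" by (simp only: eq_neg_iff_add_eq_0)
        then show ?thesis using 2 w by simp
      qed (use w diag in auto)
    qed
    finally show ?thesis by simp
  next
    case False
    have "X w = 0"
    proof (rule ccontr)
      assume "X w \<noteq> 0"
      then have "length w = 2" "set w \<subseteq> {..<n}" using supp by auto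
      then obtain x y where "w = [x, y]" by (auto simp: numeral_2_eq_2 length_Suc_conv)
      then show False using False \<open>set w \<subseteq> {..<n}\<close> by auto
    qed
    moreover have "sq_rel q (fst p) (snd p) w = 0" if "p \<in> ?P" for p
    proof -
      obtain a b where p0: "p = (a, b)" by (cases p)
      have p: "p = (a, b)" "a < n" "b < n" using that p0 by auto
      have "w \<noteq> [b, a]" "w \<noteq> [a, b]" using False p(2,3) by blast+
      then show ?thesis using p(1) by (simp add: sq_rel_val)
    qed
    ultimately show ?thesis by simp
  qed
qed

lemma phi_rel:
  assumes i: "i < n" and j: "j < n"
  shows "phi n g (sq_rel q i j) = fa_sub (fa_mult (Gv n g j) (Gv n g i)) (fa_smult (q i j) (fa_mult (Gv n g i) (Gv n g j)))"
  unfolding sq_rel_def phi_sub phi_smult phi_mult phi_gen[OF j] phi_gen[OF i] Gv_def ..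

lemma phi_rel_val:
  assumes i: "i < n" and j: "j < n" and xy: "x < n" "y < n"
  shows "phi n g (sq_rel q i j) [x, y] = g $$ (x, j) * g $$ (y, i) - q i j * (g $$ (x, i) * g $$ (y, j))"
  unfolding phi_rel[OF i j] by (simp add: fa_sub_def fa_smult_def fa_mult_2 Gv_nil Gv_1 Gv_2 xy)

lemma phi_rel_span:
  assumes K: "Kc n q g" and i: "i < n" and j: "j < n"
  shows "phi n g (sq_rel q i j) = (\<lambda>w. \<Sum>p\<in>{..<n}\<times>{..<n}. (if fst p < snd p then phi n g (sq_rel q i j) [snd p, fst p] else 0) * sq_rel q (fst p) (snd p) w)"
proof (rule span)
  let ?X = "phi n g (sq_rel q i j)"
  have H: "fa_homog n 2 ?X" using phi_homog sq_rel_homog i j by blast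
  show "length w = 2 \<and> set w \<subseteq> {..<n}" if "?X w \<noteq> 0" for w
    using H that unfolding fa_homog_def fa_carrier_def by blast
  show "?X [a, a] = 0" if a: "a < n" for a
  proof -
    have "?X [a, a] = g $$ (a, i) * g $$ (a, j) * (1 - q i j)"
      unfolding phi_rel_val[OF i j a a] by (simp add: algebra_simps)
    moreover have "g $$ (a, i) * g $$ (a, j) * (1 - q i j) = 0"
    proof (cases "g $$ (a, i) \<noteq> 0 \<and> g $$ (a, j) \<noteq> 0")
      case True
      then have "q a a = q i j" using K a i j unfolding Kc_def by blast
      then have "q i j = 1" using Q a by (simp add: qpm_def)
      then show ?thesis by simp
    qed auto
    ultimately show ?thesis by simp
  qed
  show "?X [a, b] + q a b * ?X [b, a] = 0" if ab: "a < n" "b < n" "a \<noteq> b" for a b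
  proof -
    have e: "?X [a, b] + q a b * ?X [b, a] = g $$ (a, j) * g $$ (b, i) * (1 - q a b * q i j)
        + g $$ (a, i) * g $$ (b, j) * (q a b - q i j)"
      unfolding phi_rel_val[OF i j ab(1,2)] phi_rel_val[OF i j ab(2,1)] by (simp add: algebra_simps)
    have t1: "g $$ (a, j) * g $$ (b, i) * (1 - q a b * q i j) = 0"
    proof (cases "g $$ (a, j) \<noteq> 0 \<and> g $$ (b, i) \<noteq> 0")
      case True
      then have "q b a = q i j" using K ab i j unfolding Kc_def by blast
      moreover have "q a b * q b a = 1" using Q ab by (simp add: qpm_def)
      ultimately show ?thesis by simp
    qed auto
    have t2: "g $$ (a, i) * g $$ (b, j) * (q a b - q i j) = 0"
    proof (cases "g $$ (a, i) \<noteq> 0 \<and> g $$ (b, j) \<noteq> 0")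
      case True
      then have "q a b = q i j" using K ab i j unfolding Kc_def by blast
      then show ?thesis by simp
    qed auto
    show ?thesis using e t1 t2 by simp
  qed
qed

lemma phi_I:
  assumes K: "Kc n q g"
  shows "x \<in> sq_ideal n q \<Longrightarrow> phi n g x \<in> sq_ideal n q"
proof (induction rule: sq_ideal.induct)
  case zero then show ?case using sq_ideal.zero by (simp add: phi_zero)
next
  case (add x y) then show ?case by (simp add: phi_add sq_ideal.add)
next
  case (gen a b i j)
  have "phi n g (fa_mult (fa_mult a (sq_rel q i j)) b) = fa_mult (fa_mult (phi n g a) (phi n g (sq_rel q i j))) (phi n g b)"
    by (simp add: phi_mult)
  also have "\<dots> \<in> sq_ideal n q"
    apply (subst phi_rel_span[OF K gen(3,4)])
    apply (rule I_sandwich)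
    using phi_carrier gen by auto
  finally show ?case .
qed

end

lemma fa_sub_self: "fa_sub x x = (\<lambda>w. 0)" by (auto simp: fa_sub_def)

lemma Sset_Aut:
  assumes Q: "qpm n q" and S: "g \<in> Sset n q"
  shows "g \<in> Aut_gr n q"
proof -
  obtain h where h: "h \<in> carrier_mat n n" "g * h = 1\<^sub>m n" "h * g = 1\<^sub>m n" and gc: "g \<in> carrier_mat n n"
    using S unfolding Sset_def inv_ok_def by auto
  have Sh: "h \<in> Sset n q" using Sset_inv[OF Q S h] .
  have Kg: "Kc n q g" and Kh: "Kc n q h" using S Sh by (auto simp: Sset_def)
  let ?C = "fa_carrier n" and ?I = "sq_ideal n q" and ?p = "phi n g"
  have z: "(\<lambda>w. 0) \<in> ?I" by (rule sq_ideal.zero)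
  have c1: "\<forall>x\<in>?C. ?p x \<in> ?C" using phi_carrier by blast
  have c2: "\<forall>x\<in>?C. \<forall>y\<in>?C. fa_sub x y \<in> ?I \<longrightarrow> fa_sub (?p x) (?p y) \<in> ?I"
    using phi_I[OF Q Kg] by (simp add: phi_sub[symmetric])
  have c3: "\<forall>x\<in>?C. \<forall>y\<in>?C. fa_sub (?p (fa_add x y)) (fa_add (?p x) (?p y)) \<in> ?I"
    using z by (simp add: phi_add fa_sub_self)
  have c4: "\<forall>c. \<forall>x\<in>?C. fa_sub (?p (fa_smult c x)) (fa_smult c (?p x)) \<in> ?I"
    using z by (simp add: phi_smult fa_sub_self)
  have c5: "\<forall>x\<in>?C. \<forall>y\<in>?C. fa_sub (?p (fa_mult x y)) (fa_mult (?p x) (?p y)) \<in> ?I"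
    using z by (simp add: phi_mult fa_sub_self)
  have c6: "fa_sub (?p fa_one) fa_one \<in> ?I" using z by (simp add: phi_fa_one fa_sub_self)
  have c7: "\<forall>d x. fa_homog n d x \<longrightarrow> (\<exists>y. fa_homog n d y \<and> fa_sub (?p x) y \<in> ?I)"
  proof (intro allI impI)
    fix d and x :: "nat list \<Rightarrow> 'a" assume "fa_homog n d x"
    then show "\<exists>y. fa_homog n d y \<and> fa_sub (?p x) y \<in> ?I"
      using z phi_homog[of n d x g] by (intro exI[of _ "?p x"]) (simp add: fa_sub_self)
  qed
  have c8: "\<forall>x\<in>?C. \<forall>y\<in>?C. fa_sub (?p x) (?p y) \<in> ?I \<longrightarrow> fa_sub x y \<in> ?I"
  proof (intro ballI impI)
    fix x y assume xy: "x \<in> ?C" "y \<in> ?C" "fa_sub (?p x) (?p y) \<in> ?I"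
    have "phi n h (fa_sub (?p x) (?p y)) \<in> ?I" using phi_I[OF Q Kh xy(3)] .
    also have "phi n h (fa_sub (?p x) (?p y)) = fa_sub x y"
      unfolding phi_sub phi_comp[OF gc h(1)] h(3) phi_one[OF xy(1)] phi_one[OF xy(2)] ..
    finally show "fa_sub x y \<in> ?I" .
  qed
  have c9: "\<forall>y\<in>?C. \<exists>x\<in>?C. fa_sub (?p x) y \<in> ?I"
  proof
    fix y :: "nat list \<Rightarrow> 'a" assume y: "y \<in> ?C"
    have "?p (phi n h y) = y" unfolding phi_comp[OF h(1) gc] h(2) phi_one[OF y] ..
    then show "\<exists>x\<in>?C. fa_sub (?p x) y \<in> ?I" using phi_carrier[OF y] z
      by (intro bexI[of _ "phi n h y"]) (simp_all add: fa_sub_self)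
  qed
  have "is_graded_aut n q ?p"
    unfolding is_graded_aut_def Let_def using c1 c2 c3 c4 c5 c6 c7 c8 c9 by blast
  moreover have "\<forall>j<n. fa_sub (?p (fa_gen j)) (\<lambda>w. \<Sum>i<n. g $$ (i, j) * fa_gen i w) \<in> ?I"
    using z by (simp add: phi_gen fa_sub_self)
  ultimately show ?thesis unfolding Aut_gr_def using gc by blast
qed

lemma fa_mult_gen2: "fa_mult (fa_gen a) (fa_gen b) = (\<lambda>w. if w = [a, b] then 1 else 0)"
proof
  fix w :: "nat list"
  show "fa_mult (fa_gen a) (fa_gen b) w = (if w = [a, b] then 1 else 0)"
  proof (cases w)
    case Nil then show ?thesis by (simp add: fa_mult_nil fa_gen_def)
  next
    case (Cons x w1)
    show ?thesis
    proof (cases w1)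
      case Nil then show ?thesis using Cons by (simp add: fa_mult_1 fa_gen_def)
    next
      case (Cons y w2)
      show ?thesis
      proof (cases w2)
        case Nil then show ?thesis using Cons \<open>w = x # w1\<close> by (simp add: fa_mult_2 fa_gen_def)
      next
        case (Cons z w3)
        have "fa_mult (fa_gen a) (fa_gen b) w = (\<Sum>k\<le>length w. 0)"
          unfolding fa_mult_def fa_gen_def
          by (intro sum.cong refl) (use \<open>w = x # w1\<close> \<open>w1 = y # w2\<close> Cons in \<open>auto simp: take_Cons' drop_Cons'\<close>)
        then show ?thesis using \<open>w = x # w1\<close> \<open>w1 = y # w2\<close> Cons by simp
      qed
    qed
  qed
qed

lemma ind_carrier: "a < n \<Longrightarrow> b < n \<Longrightarrow> (\<lambda>w. if w = [a, b] then 1 else 0) \<in> fa_carrier n"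
proof -
  assume ab: "a < n" "b < n"
  have "{w. (if w = [a, b] then 1 else 0) \<noteq> (0::'a)} = {[a, b]}" by auto
  then show ?thesis unfolding fa_carrier_def using ab by (auto split: if_splits)
qed

lemma smult_carrier: "x \<in> fa_carrier n \<Longrightarrow> fa_smult c x \<in> fa_carrier n"
proof -
  assume x: "x \<in> fa_carrier n"
  have sub: "{w. fa_smult c x w \<noteq> 0} \<subseteq> {w. x w \<noteq> 0}" by (auto simp: fa_smult_def)
  have "finite {w. fa_smult c x w \<noteq> 0}" by (rule finite_subset[OF sub]) (use x in \<open>simp add: fa_carrier_def\<close>)
  then show ?thesis using x unfolding fa_carrier_def fa_smult_def by auto
qed

lemma I_vanish_sub:
  assumes Q: "qpm n q" and d: "fa_sub X Y \<in> sq_ideal n q"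
  shows "X [] = Y []" "\<And>i. X [i] = Y [i]" "\<And>a b. a < n \<Longrightarrow> b < n \<Longrightarrow> lam q a b X = lam q a b Y"
  using I_vanish[OF Q d] by (auto simp: fa_sub_def lam_sub)

context
  fixes n :: nat and q :: "nat \<Rightarrow> nat \<Rightarrow> 'k::field"
  assumes Q: "qpm n q"
begin

lemma Aut_facts:
  assumes A: "is_graded_aut n q \<phi>"
  and gj: "\<forall>j<n. fa_sub (\<phi> (fa_gen j)) (\<lambda>w. \<Sum>i<n. g $$ (i, j) * fa_gen i w) \<in> sq_ideal n q"
  shows "\<phi> (\<lambda>w. 0) \<in> sq_ideal n q"
    and "\<And>a b i j. a < n \<Longrightarrow> b < n \<Longrightarrow> i < n \<Longrightarrow> j < n \<Longrightarrow>
      g $$ (a, j) * g $$ (b, i) + (if a = b then 0 else q a b * g $$ (b, j) * g $$ (a, i)) =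
      q i j * (g $$ (a, i) * g $$ (b, j) + (if a = b then 0 else q a b * g $$ (b, i) * g $$ (a, j)))"
proof -
  let ?C = "fa_carrier n" and ?I = "sq_ideal n q"
  have c2: "\<forall>x\<in>?C. \<forall>y\<in>?C. fa_sub x y \<in> ?I \<longrightarrow> fa_sub (\<phi> x) (\<phi> y) \<in> ?I"
   and c3: "\<forall>x\<in>?C. \<forall>y\<in>?C. fa_sub (\<phi> (fa_add x y)) (fa_add (\<phi> x) (\<phi> y)) \<in> ?I"
   and c4: "\<forall>c. \<forall>x\<in>?C. fa_sub (\<phi> (fa_smult c x)) (fa_smult c (\<phi> x)) \<in> ?I"
   and c5: "\<forall>x\<in>?C. \<forall>y\<in>?C. fa_sub (\<phi> (fa_mult x y)) (fa_mult (\<phi> x) (\<phi> y)) \<in> ?I"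
    using A unfolding is_graded_aut_def Let_def by blast+
  have "fa_sub (\<phi> (fa_smult 0 (\<lambda>w. 0))) (fa_smult 0 (\<phi> (\<lambda>w. 0))) \<in> ?I"
    using c4 zero_carrier by blast
  moreover have "fa_smult 0 (\<lambda>w. 0) = (\<lambda>w. (0::'k))" "fa_sub X (fa_smult 0 Y) = X" for X Y :: "nat list \<Rightarrow> 'k"
    by (auto simp: fa_smult_def fa_sub_def)
  ultimately show phi0: "\<phi> (\<lambda>w. 0) \<in> ?I" by simp
  fix a b i j assume abij: "a < n" "b < n" "i < n" "j < n"
  have V: "\<phi> (fa_gen k) [] = 0" "\<phi> (fa_gen k) [x] = g $$ (x, k)" "lam q x y (\<phi> (fa_gen k)) = 0"
    if "k < n" "x < n" "y < n" for k x y
  proof -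
    have d: "fa_sub (\<phi> (fa_gen k)) (Gv n g k) \<in> ?I" using gj that unfolding Gv_def by blast
    show "\<phi> (fa_gen k) [] = 0" using I_vanish_sub(1)[OF Q d] Gv_nil by simp
    show "\<phi> (fa_gen k) [x] = g $$ (x, k)" using I_vanish_sub(2)[OF Q d] Gv_1[OF that(2)] by simp
    show "lam q x y (\<phi> (fa_gen k)) = 0" using I_vanish_sub(3)[OF Q d that(2,3)] lam_Gv by simp
  qed
  have lamprod: "lam q a b (\<phi> (fa_mult (fa_gen k) (fa_gen l))) =
      g $$ (a, k) * g $$ (b, l) + (if a = b then 0 else q a b * g $$ (b, k) * g $$ (a, l))"
    if kl: "k < n" "l < n" for k l
  proof -
    have d: "fa_sub (\<phi> (fa_mult (fa_gen k) (fa_gen l))) (fa_mult (\<phi> (fa_gen k)) (\<phi> (fa_gen l))) \<in> ?I"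
      using c5 gen_carrier kl by blast
    have "lam q a b (\<phi> (fa_mult (fa_gen k) (fa_gen l))) = lam q a b (fa_mult (\<phi> (fa_gen k)) (\<phi> (fa_gen l)))"
      using I_vanish_sub(3)[OF Q d abij(1,2)] .
    also have "\<dots> = g $$ (a, k) * g $$ (b, l) + (if a = b then 0 else q a b * g $$ (b, k) * g $$ (a, l))"
      unfolding lam_mult using V kl abij by simp
    finally show ?thesis .
  qed
  let ?A = "fa_mult (fa_gen j) (fa_gen i)" and ?B = "fa_mult (fa_gen i) (fa_gen j)"
  let ?S = "fa_smult (- q i j) ?B" and ?r = "sq_rel q i j"
  have AC: "?A \<in> ?C" "?B \<in> ?C" unfolding fa_mult_gen2 using ind_carrier abij by auto
  have SC: "?S \<in> ?C" using smult_carrier AC by blast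
  have rC: "?r \<in> ?C" using sq_rel_carrier abij by blast
  have r_eq: "?r = fa_add ?A ?S" unfolding sq_rel_def by (auto simp: fa_sub_def fa_add_def fa_smult_def)
  have d1: "fa_sub (\<phi> ?r) (\<phi> (\<lambda>w. 0)) \<in> ?I"
  proof -
    have "fa_sub ?r (\<lambda>w. 0) = ?r" by (auto simp: fa_sub_def)
    then have "fa_sub ?r (\<lambda>w. 0) \<in> ?I" using sq_rel_I abij by simp
    then show ?thesis using c2 rC zero_carrier by blast
  qed
  have l0: "lam q a b (\<phi> (\<lambda>w. 0)) = 0" using I_vanish[OF Q phi0] abij by blast
  have lr: "lam q a b (\<phi> ?r) = 0" using I_vanish_sub(3)[OF Q d1 abij(1,2)] l0 by simp
  have d2: "fa_sub (\<phi> (fa_add ?A ?S)) (fa_add (\<phi> ?A) (\<phi> ?S)) \<in> ?I" using c3 AC SC by blast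
  have d3: "fa_sub (\<phi> ?S) (fa_smult (- q i j) (\<phi> ?B)) \<in> ?I" using c4 AC by blast
  have "lam q a b (\<phi> ?r) = lam q a b (\<phi> ?A) + lam q a b (\<phi> ?S)"
    using I_vanish_sub(3)[OF Q d2 abij(1,2)] r_eq by (simp add: lam_add)
  also have "lam q a b (\<phi> ?S) = - q i j * lam q a b (\<phi> ?B)"
    using I_vanish_sub(3)[OF Q d3 abij(1,2)] by (simp add: lam_smult)
  finally have "lam q a b (\<phi> ?A) - q i j * lam q a b (\<phi> ?B) = 0" using lr by simp
  then show "g $$ (a, j) * g $$ (b, i) + (if a = b then 0 else q a b * g $$ (b, j) * g $$ (a, i)) =
      q i j * (g $$ (a, i) * g $$ (b, j) + (if a = b then 0 else q a b * g $$ (b, i) * g $$ (a, j)))"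
    unfolding lamprod[OF abij(4,3)] lamprod[OF abij(3,4)] by simp
qed

end

lemma add_carrier: "x \<in> fa_carrier n \<Longrightarrow> y \<in> fa_carrier n \<Longrightarrow> fa_add x y \<in> fa_carrier n"
proof -
  assume x: "x \<in> fa_carrier n" and y: "y \<in> fa_carrier n"
  have sub: "{w. fa_add x y w \<noteq> 0} \<subseteq> {w. x w \<noteq> 0} \<union> {w. y w \<noteq> 0}" by (auto simp: fa_add_def)
  have "finite {w. fa_add x y w \<noteq> 0}"
    by (rule finite_subset[OF sub]) (use x y in \<open>simp add: fa_carrier_def\<close>)
  moreover have "set w \<subseteq> {..<n}" if "fa_add x y w \<noteq> 0" for w
  proof -
    have "x w \<noteq> 0 \<or> y w \<noteq> 0" using that by (auto simp: fa_add_def)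
    then show ?thesis using x y unfolding fa_carrier_def by blast
  qed
  ultimately show ?thesis unfolding fa_carrier_def by auto
qed

lemma unit_inv_ok:
  fixes g :: "'k::field mat"
  assumes g: "g \<in> carrier_mat n n" and d: "det g \<noteq> 0"
  shows "inv_ok n g"
proof -
  have "g \<in> Units (ring_mat TYPE('k) n ())" by (rule det_non_zero_imp_unit[OF g d])
  then obtain h where "h \<in> carrier_mat n n" "h * g = 1\<^sub>m n" "g * h = 1\<^sub>m n"
    unfolding Units_def ring_mat_def by auto
  then show ?thesis unfolding inv_ok_def using g by auto
qed

context
  fixes n :: nat and q :: "nat \<Rightarrow> nat \<Rightarrow> 'k::field"
  assumes Q: "qpm n q"
begin

lemma Aut_inv:
  assumes gA: "g \<in> Aut_gr n q"
  shows "inv_ok n g"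
proof -
  obtain \<phi> where A: "is_graded_aut n q \<phi>"
    and gj: "\<forall>j<n. fa_sub (\<phi> (fa_gen j)) (\<lambda>w. \<Sum>i<n. g $$ (i, j) * fa_gen i w) \<in> sq_ideal n q"
    and gc: "g \<in> carrier_mat n n"
    using gA unfolding Aut_gr_def by blast
  let ?C = "fa_carrier n" and ?I = "sq_ideal n q"
  have c3: "\<forall>x\<in>?C. \<forall>y\<in>?C. fa_sub (\<phi> (fa_add x y)) (fa_add (\<phi> x) (\<phi> y)) \<in> ?I"
   and c4: "\<forall>c. \<forall>x\<in>?C. fa_sub (\<phi> (fa_smult c x)) (fa_smult c (\<phi> x)) \<in> ?I"
   and c8: "\<forall>x\<in>?C. \<forall>y\<in>?C. fa_sub (\<phi> x) (\<phi> y) \<in> ?I \<longrightarrow> fa_sub x y \<in> ?I"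
    using A unfolding is_graded_aut_def Let_def by blast+
  have phi0: "\<phi> (\<lambda>w. 0) \<in> ?I" using Aut_facts(1)[OF Q A gj] .
  have "det g \<noteq> 0"
  proof
    assume "det g = 0"
    then obtain v where v: "v \<in> carrier_vec n" "v \<noteq> 0\<^sub>v n" "g *\<^sub>v v = 0\<^sub>v n"
      using det_0_iff_vec_prod_zero[OF gc] by blast
    define X where "X m = (\<lambda>w. \<Sum>j<m. v $ j * fa_gen j w)" for m
    define T where "T m = (\<lambda>w. \<Sum>j<m. v $ j * Gv n g j w)" for m
    have ind: "m \<le> n \<Longrightarrow> X m \<in> ?C \<and> fa_sub (\<phi> (X m)) (T m) \<in> ?I" for m
    proof (induction m)
      case 0
      have "X 0 = (\<lambda>w. 0)" "T 0 = (\<lambda>w. 0)" by (auto simp: X_def T_def)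
      moreover have "fa_sub (\<phi> (\<lambda>w. 0)) (\<lambda>w. 0) = \<phi> (\<lambda>w. 0)" by (auto simp: fa_sub_def)
      ultimately show ?case using phi0 zero_carrier by simp
    next
      case (Suc m)
      then have m: "m < n" by simp
      let ?c = "v $ m"
      let ?S = "fa_smult ?c (fa_gen m)"
      have IH: "X m \<in> ?C" "fa_sub (\<phi> (X m)) (T m) \<in> ?I" using Suc by auto
      have SC: "?S \<in> ?C" using smult_carrier gen_carrier m by blast
      have Xs: "X (Suc m) = fa_add (X m) ?S" by (auto simp: X_def fa_add_def fa_smult_def)
      have XC: "X (Suc m) \<in> ?C" using Xs add_carrier IH SC by simp
      have D1: "fa_sub (\<phi> (X (Suc m))) (fa_add (\<phi> (X m)) (\<phi> ?S)) \<in> ?I" using c3 IH SC Xs by simp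
      have D2: "fa_sub (\<phi> ?S) (fa_smult ?c (\<phi> (fa_gen m))) \<in> ?I" using c4 gen_carrier m by blast
      have D3: "fa_smult ?c (fa_sub (\<phi> (fa_gen m)) (Gv n g m)) \<in> ?I"
        using I_smult gj m unfolding Gv_def by blast
      have "fa_sub (\<phi> (X (Suc m))) (T (Suc m)) =
          fa_add (fa_sub (\<phi> (X (Suc m))) (fa_add (\<phi> (X m)) (\<phi> ?S)))
            (fa_add (fa_sub (\<phi> (X m)) (T m))
              (fa_add (fa_sub (\<phi> ?S) (fa_smult ?c (\<phi> (fa_gen m)))) (fa_smult ?c (fa_sub (\<phi> (fa_gen m)) (Gv n g m)))))"
        by (auto simp: fa_sub_def fa_add_def fa_smult_def T_def algebra_simps intro!: ext)
      also have "\<dots> \<in> ?I" using D1 D2 D3 IH by (intro sq_ideal.add)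
      finally show ?case using XC by simp
    qed
    have Tn: "T n = (\<lambda>w. 0)"
    proof
      fix w :: "nat list"
      have "T n w = (\<Sum>j<n. \<Sum>l<n. v $ j * g $$ (l, j) * fa_gen l w)"
        unfolding T_def Gv_def by (simp add: sum_distrib_left mult.assoc)
      also have "\<dots> = (\<Sum>l<n. (\<Sum>j<n. g $$ (l, j) * v $ j) * fa_gen l w)"
        by (subst sum.swap) (intro sum.cong refl; simp add: sum_distrib_left ac_simps)
      also have "\<dots> = (\<Sum>l<n. (g *\<^sub>v v) $ l * fa_gen l w)"
        using gc v(1) by (intro sum.cong refl) (simp add: scalar_prod_def atLeast0LessThan ac_simps)
      also have "\<dots> = 0" using v(3) gc by (intro sum.neutral) simp
      finally show "T n w = 0" .
    qed
    have "fa_sub (\<phi> (X n)) (T n) \<in> ?I" and XnC: "X n \<in> ?C" using ind by auto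
    moreover have "fa_sub (\<phi> (X n)) (\<lambda>w. 0) = \<phi> (X n)" by (auto simp: fa_sub_def)
    ultimately have "\<phi> (X n) \<in> ?I" using Tn by simp
    then have "fa_sub (\<phi> (X n)) (\<phi> (\<lambda>w. 0)) \<in> ?I" using I_sub phi0 by blast
    then have "fa_sub (X n) (\<lambda>w. 0) \<in> ?I" using c8 XnC zero_carrier by blast
    moreover have "fa_sub (X n) (\<lambda>w. 0) = X n" by (auto simp: fa_sub_def)
    ultimately have XI: "X n \<in> ?I" by simp
    have "v = 0\<^sub>v n"
    proof (rule eq_vecI)
      fix k assume "k < dim_vec (0\<^sub>v n :: 'k vec)"
      then have k: "k < n" by simp
      have "X n [k] = (\<Sum>j<n. if j = k then v $ k else 0)"
        unfolding X_def fa_gen_def by (intro sum.cong refl) auto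
      also have "\<dots> = v $ k" using k by simp
      finally have "v $ k = 0" using I_vanish[OF Q XI] by simp
      then show "v $ k = 0\<^sub>v n $ k" using k by simp
    qed (use v in auto)
    then show False using v by simp
  qed
  then show ?thesis using unit_inv_ok gc by blast
qed

lemma E_K:
  fixes g :: "'k mat"
  assumes I: "inv_ok n g"
    and E: "\<And>a b i j. a < n \<Longrightarrow> b < n \<Longrightarrow> i < n \<Longrightarrow> j < n \<Longrightarrow>
      g $$ (a, j) * g $$ (b, i) + (if a = b then 0 else q a b * g $$ (b, j) * g $$ (a, i)) =
      q i j * (g $$ (a, i) * g $$ (b, j) + (if a = b then 0 else q a b * g $$ (b, i) * g $$ (a, j)))"
  shows "Kc n q g"
proof -
  obtain h where h: "h \<in> carrier_mat n n" "g * h = 1\<^sub>m n" and gc: "g \<in> carrier_mat n n"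
    using I unfolding inv_ok_def by auto
  have AF: "q i j = 1" if "a < n" "i < n" "j < n" "g $$ (a, i) \<noteq> 0" "g $$ (a, j) \<noteq> 0" for a i j
  proof -
    have "g $$ (a, j) * g $$ (a, i) = q i j * (g $$ (a, i) * g $$ (a, j))" using E[of a a i j] that by simp
    then have "(g $$ (a, i) * g $$ (a, j)) * (1 - q i j) = 0" by (simp add: algebra_simps)
    then show ?thesis using that by simp
  qed
  have D0: "q a b = 1" if ab: "a < n" "b < n" "i < n" "a \<noteq> b" "g $$ (a, i) \<noteq> 0" "g $$ (b, i) \<noteq> 0" for a b i
  proof (rule ccontr)
    assume p: "q a b \<noteq> 1"
    define t where "t = g $$ (b, i) / g $$ (a, i)"
    have row: "g $$ (b, j) = t * g $$ (a, j)" if j: "j < n" for j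
    proof -
      have "g $$ (b, j) * g $$ (a, i) = g $$ (a, j) * g $$ (b, i)"
      proof (cases "q i j = 1")
        case True
        have "g $$ (a, j) * g $$ (b, i) + q a b * g $$ (b, j) * g $$ (a, i) =
            g $$ (a, i) * g $$ (b, j) + q a b * g $$ (b, i) * g $$ (a, j)"
          using E[of a b i j] ab j True by simp
        then have "(g $$ (a, j) * g $$ (b, i) - g $$ (b, j) * g $$ (a, i)) * (1 - q a b) = 0"
          by (simp add: algebra_simps)
        then show ?thesis using p by simp
      next
        case False
        then have "g $$ (a, j) = 0" "g $$ (b, j) = 0" using AF[of a i j] AF[of b i j] ab j by auto
        then show ?thesis by simp
      qed
      then show ?thesis using ab unfolding t_def by (simp add: field_simps)
    qed
    have "(g * h) $$ (b, b) = (\<Sum>c<n. g $$ (b, c) * h $$ (c, b))" using mult_entry[OF gc h(1)] ab by simp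
    also have "\<dots> = t * (\<Sum>c<n. g $$ (a, c) * h $$ (c, b))"
      by (simp add: row sum_distrib_left mult.assoc)
    also have "(\<Sum>c<n. g $$ (a, c) * h $$ (c, b)) = (g * h) $$ (a, b)" using mult_entry[OF gc h(1)] ab by simp
    finally have "(g * h) $$ (b, b) = t * (g * h) $$ (a, b)" .
    then show False using h ab by simp
  qed
  show ?thesis unfolding Kc_def
  proof (intro allI impI)
    fix a i b j assume h1: "a < n" "i < n" "b < n" "j < n" "g $$ (a, i) \<noteq> 0" "g $$ (b, j) \<noteq> 0"
    show "q a b = q i j"
    proof (cases "a = b")
      case True
      then have "q i j = 1" using AF[of a i j] h1 by simp
      moreover have "q a b = 1" using Q True h1 by (simp add: qpm_def)
      ultimately show ?thesis by simp
    next
      case False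
      show ?thesis
      proof (cases "g $$ (a, j) * g $$ (b, i) = 0")
        case True
        have e: "g $$ (a, j) * g $$ (b, i) + q a b * g $$ (b, j) * g $$ (a, i) =
          q i j * (g $$ (a, i) * g $$ (b, j) + q a b * g $$ (b, i) * g $$ (a, j))"
          using E[of a b i j] h1 False by simp
        have "g $$ (b, i) * g $$ (a, j) = 0" using True by (simp add: mult.commute)
        then have "(g $$ (a, i) * g $$ (b, j)) * (q a b - q i j) = 0" using e True
          by (simp add: algebra_simps)
        then show ?thesis using h1 by simp
      next
        case F2: False
        then have "g $$ (a, j) \<noteq> 0" "g $$ (b, i) \<noteq> 0" by auto
        then have "q i j = 1" "q a b = 1" using AF[of a i j] D0[of a b i] h1 False by auto
        then show ?thesis by simp
      qed
    qed
  qed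
qed

lemma Aut_Sset: "g \<in> Aut_gr n q \<Longrightarrow> g \<in> Sset n q"
proof -
  assume gA: "g \<in> Aut_gr n q"
  obtain \<phi> where A: "is_graded_aut n q \<phi>"
    and gj: "\<forall>j<n. fa_sub (\<phi> (fa_gen j)) (\<lambda>w. \<Sum>i<n. g $$ (i, j) * fa_gen i w) \<in> sq_ideal n q"
    using gA unfolding Aut_gr_def by blast
  have I: "inv_ok n g" using Aut_inv[OF gA] .
  have "Kc n q g" by (rule E_K[OF I Aut_facts(2)[OF Q A gj]])
  then show ?thesis using I by (simp add: Sset_def)
qed

end

lemma SP_comp:
  assumes Q: "qpm n q" and x: "x \<in> Sset n q" and y: "y \<in> Sset n q"
    and sx: "\<sigma> \<in> Stab n q" "SP n q x \<sigma>" and sy: "\<tau> \<in> Stab n q" "SP n q y \<tau>"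
  shows "SP n q (x * y) (\<sigma> \<circ> \<tau>)"
  unfolding SP_def
proof (intro allI impI)
  fix a c assume h: "a < n" "c < n" "(x * y) $$ (a, c) \<noteq> 0"
  have c: "x \<in> carrier_mat n n" "y \<in> carrier_mat n n" using x y by (auto simp: Sset_def inv_ok_def)
  obtain m where m: "m < n" "x $$ (a, m) \<noteq> 0" "y $$ (m, c) \<noteq> 0" using mult_entry_nz[OF c h] by auto
  have "m \<in> \<tau> (blk n q c)" using sy m h unfolding SP_def by auto
  moreover have "\<tau> (blk n q c) \<in> blocks n q" using Stab_blocks[OF Q sy(1)] h by (auto simp: blocks_iff)
  ultimately have "blk n q m = \<tau> (blk n q c)" using blocks_mem_blk by metis
  moreover have "a \<in> \<sigma> (blk n q m)" using sx m h unfolding SP_def by auto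
  ultimately show "a \<in> (\<sigma> \<circ> \<tau>) (blk n q c)" by simp
qed

theorem corollary2p7:
  fixes q :: "nat \<Rightarrow> nat \<Rightarrow> 'k::field" and n :: nat
  assumes "qpm n q"
  shows "Aut_gr_group n q \<cong> semidirect n q"
proof -
  note Q = assms
  have AS: "Aut_gr n q = Sset n q" using Aut_Sset[OF Q] Sset_Aut[OF Q] by blast
  define sg where "sg g = (SOME \<sigma>. \<sigma> \<in> Stab n q \<and> SP n q g \<sigma>)" for g :: "'k mat"
  define Phi where "Phi g = (g * iota n q (inv_into UNIV (sg g)), sg g)" for g
  have sgP: "sg g \<in> Stab n q \<and> SP n q g (sg g)" if "g \<in> Sset n q" for g
  proof -
    have ex: "\<exists>\<sigma>. \<sigma> \<in> Stab n q \<and> SP n q g \<sigma>" using Sset_Stab_exists[OF Q that] by blast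
    show ?thesis unfolding sg_def using someI_ex[OF ex] .
  qed
  have sg_eq: "sg g = \<sigma>" if "g \<in> Sset n q" "\<sigma> \<in> Stab n q" "SP n q g \<sigma>" for g \<sigma>
    using SP_unique[OF Q _ _ that(2)] sgP[OF that(1)] that unfolding Sset_def by blast
  have carr: "g \<in> carrier_mat n n" if "g \<in> Sset n q" for g using that by (auto simp: Sset_def inv_ok_def)
  have ic: "iota n q \<sigma> \<in> carrier_mat n n" for \<sigma> using iota_carrier[OF Q] .
  have Phi_in: "Phi g \<in> block_prod n q \<times> Stab n q" if "g \<in> Sset n q" for g
    using BD_block_prod Sset_BD[OF Q that] sgP[OF that] unfolding Phi_def by auto
  have hom: "Phi (x * y) = Phi x \<otimes>\<^bsub>semidirect n q\<^esub> Phi y" if xy: "x \<in> Sset n q" "y \<in> Sset n q" for x y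
  proof -
    let ?s = "sg x" and ?t = "sg y"
    have s: "?s \<in> Stab n q" "SP n q x ?s" and t: "?t \<in> Stab n q" "SP n q y ?t" using sgP xy by auto
    have st: "?s \<circ> ?t \<in> Stab n q" using Stab_comp[OF Q s(1) t(1)] .
    have sxy: "sg (x * y) = ?s \<circ> ?t"
      using sg_eq[OF Sset_mult[OF Q xy] st SP_comp[OF Q xy s t]] .
    have ps: "?s permutes blocks n q" "?t permutes blocks n q" using s t by (auto simp: Stab_def)
    have invst: "inv_into UNIV (?s \<circ> ?t) = inv_into UNIV ?t \<circ> inv_into UNIV ?s"
      using o_inv_distrib permutes_bij ps by blast
    let ?X = "x" and ?Y = "y" and ?P = "iota n q ?s" and ?Qs = "iota n q (inv_into UNIV ?s)"
      and ?Qt = "iota n q (inv_into UNIV ?t)"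
    have cX: "x \<in> carrier_mat n n" "y \<in> carrier_mat n n" using carr xy by auto
    have QP: "?Qs * ?P = 1\<^sub>m n" using iota_inv(2)[OF Q s(1)] .
    have QQ: "?Qt * ?Qs = iota n q (inv_into UNIV (?s \<circ> ?t))"
      unfolding invst using iota_mult[OF Q Stab_inv[OF Q t(1)] Stab_inv[OF Q s(1)]] .
    have mi: "mat_inv n ?P = ?Qs" using mat_inv_iota[OF Q s(1)] .
    have "Phi x \<otimes>\<^bsub>semidirect n q\<^esub> Phi y = (x * ?Qs * ?P * (y * ?Qt) * ?Qs, ?s \<circ> ?t)"
      unfolding Phi_def semidirect_def by (simp add: mi)
    also have "x * ?Qs * ?P = x"
      using assoc_mult_mat[OF cX(1) ic ic] QP right_mult_one_mat[OF cX(1)] by simp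
    also have "x * (y * ?Qt) * ?Qs = (x * y) * (?Qt * ?Qs)"
    proof -
      have c1: "y * ?Qt \<in> carrier_mat n n" "?Qt * ?Qs \<in> carrier_mat n n"
        using mult_carrier_mat[OF cX(2) ic] mult_carrier_mat[OF ic ic] by auto
      have "x * (y * ?Qt) * ?Qs = x * ((y * ?Qt) * ?Qs)" using assoc_mult_mat[OF cX(1) c1(1) ic] .
      also have "(y * ?Qt) * ?Qs = y * (?Qt * ?Qs)" using assoc_mult_mat[OF cX(2) ic ic] .
      also have "x * (y * (?Qt * ?Qs)) = (x * y) * (?Qt * ?Qs)" using assoc_mult_mat[OF cX c1(2)] by simp
      finally show ?thesis .
    qed
    finally show ?thesis unfolding Phi_def sxy QQ by (simp add: comp_def)
  qed
  have inj: "inj_on Phi (Sset n q)"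
  proof (rule inj_onI)
    fix x y assume xy: "x \<in> Sset n q" "y \<in> Sset n q" "Phi x = Phi y"
    then have e: "sg x = sg y" "x * iota n q (inv_into UNIV (sg x)) = y * iota n q (inv_into UNIV (sg x))"
      unfolding Phi_def by auto
    let ?s = "sg x"
    have s: "?s \<in> Stab n q" using sgP xy by auto
    have "x = x * iota n q (inv_into UNIV ?s) * iota n q ?s"
      using assoc_mult_mat[OF carr[OF xy(1)] ic ic] iota_inv(2)[OF Q s] right_mult_one_mat[OF carr[OF xy(1)]] by simp
    also have "\<dots> = y * iota n q (inv_into UNIV ?s) * iota n q ?s" using e by simp
    also have "\<dots> = y"
      using assoc_mult_mat[OF carr[OF xy(2)] ic ic] iota_inv(2)[OF Q s] right_mult_one_mat[OF carr[OF xy(2)]] by simp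
    finally show "x = y" .
  qed
  have img: "Phi ` Sset n q = block_prod n q \<times> Stab n q"
  proof (intro equalityI subsetI)
    fix p assume "p \<in> Phi ` Sset n q" then show "p \<in> block_prod n q \<times> Stab n q" using Phi_in by auto
  next
    fix p assume "p \<in> block_prod n q \<times> Stab n q"
    then obtain f \<sigma> where p: "p = (f, \<sigma>)" "f \<in> BD n q" "\<sigma> \<in> Stab n q"
      using block_prod_BD by (cases p) auto
    have g: "f * iota n q \<sigma> \<in> Sset n q" "SP n q (f * iota n q \<sigma>) \<sigma>" using BD_iota[OF Q p(2,3)] by auto
    have sg1: "sg (f * iota n q \<sigma>) = \<sigma>" using sg_eq[OF g(1) p(3) g(2)] .
    have fc: "f \<in> carrier_mat n n" using p by (auto simp: BD_def inv_ok_def)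
    have "Phi (f * iota n q \<sigma>) = (f * iota n q \<sigma> * iota n q (inv_into UNIV \<sigma>), \<sigma>)"
      unfolding Phi_def sg1 ..
    also have "f * iota n q \<sigma> * iota n q (inv_into UNIV \<sigma>) = f"
      using assoc_mult_mat[OF fc ic ic] iota_inv(1)[OF Q p(3)] right_mult_one_mat[OF fc] by simp
    finally show "p \<in> Phi ` Sset n q" using g(1) p(1) by force
  qed
  have "Phi \<in> iso (Aut_gr_group n q) (semidirect n q)"
    unfolding iso_def
  proof (intro CollectI conjI)
    show "Phi \<in> hom (Aut_gr_group n q) (semidirect n q)"
      by (rule homI) (use Phi_in hom AS in \<open>auto simp: Aut_gr_group_def semidirect_def\<close>)
    show "bij_betw Phi (carrier (Aut_gr_group n q)) (carrier (semidirect n q))"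
      unfolding bij_betw_def using inj img AS by (simp add: Aut_gr_group_def semidirect_def)
  qed
  then show ?thesis unfolding is_iso_def by blast
qed

end
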